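(* Let $\Omega$, $\beta$, $r=1/\beta$ satisfy the curvature assumption $r<r_0/2$, suppose the magnetic billiard in $\Omega$ admits a polynomial in momenta integral $\Phi$, and let $F$ be the corresponding function on $\overline{\Omega_r}$ defined by $F\circ\mathcal{L}=\Phi$. Then $F$ is constant on $\gamma_{+r}$ and $F$ is constant on $\gamma_{-r}$.
   Context: $\Omega\subset\mathbb{R}^2$ is a bounded domain with boundary $\gamma$ a simple closed $C^\infty$ curve parametrized counterclockwise by arc length; $J$ is the counterclockwise rotation by $\pi/2$, $n=J\dot\gamma$, $\gamma_t=\gamma+t\,n$, and $r_0$ is the largest radius for which the tubular neighbourhood of $\gamma$ is diffeomorphic to its normal bundle. Magnetic billiard: a particle moves in $\Omega$ with unit speed along arcs of circles of radius $r$ traversed counterclockwise (Larmor arcs), reflected at $\gamma$ by $v\mapsto v-2\langle n,v\rangle n$; $g^t$ is the flow on unit tangent vectors. $\Omega_+$ is the closed annulus bounded by $\gamma$ and $\gamma_{+2r}$. A polynomial in momenta integral is $\Phi(x,v)=\sum_{0\le k+l\le N}a_{kl}(x)v_1^kv_2^l$ on unit tangent vectors over $\Omega_+$, $a_{kl}\in C^\infty(\overline{\Omega_+})$, such that (1) $\Phi(g^t(x,v))=\Phi(x,v)$ between collisions for $x\in\gamma$, $v$ inward unit, and (2) $\Phi(x,v)=\Phi(x,v-2\langle n,v\rangle n)$ for $x\in\partial\Omega$. $\Omega_r$ is the annulus bounded by $\gamma_{+r}$ and $\gamma_{-r}$ (the set of centers of radius-$r$ circles meeting $\gamma$), $\mathcal{L}(x,v)=x+rJv$,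 and $F(x+rJv)=\Phi(x,v)$ for unit vectors tangent to Larmor arcs inside $\Omega$ meeting $\partial\Omega$ (well defined since $\Phi$ is constant on Larmor arcs), extended to $\overline{\Omega_r}$ by continuity. *)

theory Defs
  imports "HOL-Complex_Analysis.Complex_Analysis"
begin

text \<open>The plane is identified with the complex numbers; J (rotation by pi/2) is
multiplication by the imaginary unit.\<close>

definition smooth_curve :: "(real \<Rightarrow> complex) \<Rightarrow> bool" where
  "smooth_curve \<gamma> \<longleftrightarrow> (\<exists>D::nat \<Rightarrow> real \<Rightarrow> complex. D 0 = \<gamma> \<and>
      (\<forall>k t. (D k has_vector_derivative D (Suc k) t) (at t)))"

definition tangent :: "(real \<Rightarrow> complex) \<Rightarrow> real \<Rightarrow> complex" where
  "tangent \<gamma> t = vector_derivative \<gamma> (at t)"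

definition normal :: "(real \<Rightarrow> complex) \<Rightarrow> real \<Rightarrow> complex" where
  "normal \<gamma> t = \<i> * tangent \<gamma> t"

definition curvature :: "(real \<Rightarrow> complex) \<Rightarrow> real \<Rightarrow> real" where
  "curvature \<gamma> t = Re (cnj (normal \<gamma> t) * vector_derivative (tangent \<gamma>) (at t))"

definition offset :: "(real \<Rightarrow> complex) \<Rightarrow> real \<Rightarrow> real \<Rightarrow> complex" where
  "offset \<gamma> s t = \<gamma> t + complex_of_real s * normal \<gamma> t"

text \<open>The normal map (t,s) |-> gamma(t) + s n(t) on [0,L) x (-rho,rho) is a
diffeomorphism onto its image: injective with non-singular Jacobian (1 - s kappa /= 0).\<close>
definition tube_ok :: "(real \<Rightarrow> complex) \<Rightarrow> real \<Rightarrow> real \<Rightarrow> bool" where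
  "tube_ok \<gamma> L \<rho> \<longleftrightarrow>
     (\<forall>t s t' s'. t \<in> {0..<L} \<and> t' \<in> {0..<L} \<and> \<bar>s\<bar> < \<rho> \<and> \<bar>s'\<bar> < \<rho> \<and>
         offset \<gamma> s t = offset \<gamma> s' t' \<longrightarrow> t = t' \<and> s = s') \<and>
     (\<forall>t s. \<bar>s\<bar> < \<rho> \<longrightarrow> 1 - s * curvature \<gamma> t \<noteq> 0)"

definition tubular_radius :: "(real \<Rightarrow> complex) \<Rightarrow> real \<Rightarrow> real" where
  "tubular_radius \<gamma> L = Sup {\<rho>. 0 < \<rho> \<and> tube_ok \<gamma> L \<rho>}"

text \<open>C-infinity on an open set: all iterated partial derivatives exist.\<close>
definition smooth_on :: "complex set \<Rightarrow> (complex \<Rightarrow> real) \<Rightarrow> bool" where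
  "smooth_on U f \<longleftrightarrow> (\<exists>S. f \<in> S \<and> (\<forall>g\<in>S. \<exists>g1\<in>S. \<exists>g2\<in>S. \<forall>z\<in>U.
      (g has_derivative (\<lambda>h. Re h * g1 z + Im h * g2 z)) (at z)))"

definition smooth_on_closed :: "complex set \<Rightarrow> (complex \<Rightarrow> real) \<Rightarrow> bool" where
  "smooth_on_closed S f \<longleftrightarrow> (\<exists>U g. open U \<and> S \<subseteq> U \<and> smooth_on U g \<and> (\<forall>z\<in>S. g z = f z))"

definition Omega_plus :: "(real \<Rightarrow> complex) \<Rightarrow> real \<Rightarrow> complex set" where
  "Omega_plus \<gamma> r = {offset \<gamma> s t | s t. s \<in> {0..2*r}}"

definition Omega_r_closed :: "(real \<Rightarrow> complex) \<Rightarrow> real \<Rightarrow> complex set" where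
  "Omega_r_closed \<gamma> r = {offset \<gamma> s t | s t. s \<in> {-r..r}}"

definition poly_mom :: "(nat \<Rightarrow> nat \<Rightarrow> complex \<Rightarrow> real) \<Rightarrow> nat \<Rightarrow> complex \<Rightarrow> complex \<Rightarrow> real" where
  "poly_mom a N x v = (\<Sum>(k,l)\<in>{(k,l). k + l \<le> N}. a k l x * Re v ^ k * Im v ^ l)"

text \<open>Larmor arc of radius r through (x,v), traversed counterclockwise with unit speed;
its centre is x + r J v.\<close>
definition larmor_pos :: "real \<Rightarrow> complex \<Rightarrow> complex \<Rightarrow> real \<Rightarrow> complex" where
  "larmor_pos r x v s = x + \<i> * of_real r * v - \<i> * of_real r * v * exp (\<i> * of_real (s / r))"

definition larmor_vel :: "real \<Rightarrow> complex \<Rightarrow> real \<Rightarrow> complex" where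
  "larmor_vel r v s = v * exp (\<i> * of_real (s / r))"

definition reflect :: "complex \<Rightarrow> complex \<Rightarrow> complex" where
  "reflect n v = v - 2 * of_real (Re (cnj n * v)) * n"

definition poly_integral ::
  "(real \<Rightarrow> complex) \<Rightarrow> complex set \<Rightarrow> real \<Rightarrow> (nat \<Rightarrow> nat \<Rightarrow> complex \<Rightarrow> real) \<Rightarrow> nat \<Rightarrow> bool" where
  "poly_integral \<gamma> \<Omega> r a N \<longleftrightarrow>
     (\<forall>k l. k + l \<le> N \<longrightarrow> smooth_on_closed (Omega_plus \<gamma> r) (a k l)) \<and>
     (\<forall>t v s. norm v = 1 \<and> Re (cnj (normal \<gamma> t) * v) > 0 \<and> 0 \<le> s \<and>
        (\<forall>s'\<in>{0<..<s}. larmor_pos r (\<gamma> t) v s' \<in> \<Omega>) \<longrightarrow>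
        poly_mom a N (larmor_pos r (\<gamma> t) v s) (larmor_vel r v s) = poly_mom a N (\<gamma> t) v) \<and>
     (\<forall>t v. norm v = 1 \<longrightarrow>
        poly_mom a N (\<gamma> t) v = poly_mom a N (\<gamma> t) (reflect (normal \<gamma> t) v))"

end

theory Submission
  imports Defs
begin

lemma wn_neg:
  assumes g: "valid_path g" "z \<notin> path_image g" and e: "0 < e"
    and d: "\<And>x. 0 < x \<Longrightarrow> x < 1 \<Longrightarrow> (g has_vector_derivative g' x) (at x)"
    and b: "\<And>x. 0 < x \<Longrightarrow> x < 1 \<Longrightarrow> Im (g' x * cnj (g x - z)) \<le> - e"
  shows "Re (winding_number g z) < 0"
proof -
  have "0 < Re (winding_number (reversepath g) z)"
  proof (rule winding_number_pos_lt[OF _ _ e])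
    show "valid_path (reversepath g)" using g by simp
    show "z \<notin> path_image (reversepath g)" using g by simp
    fix x :: real assume x: "0 < x" "x < 1"
    have "((g \<circ> (\<lambda>x. 1 - x)) has_vector_derivative ((-1) *\<^sub>R g' (1 - x))) (at x)"
      by (rule vector_diff_chain_at) (auto intro!: derivative_eq_intros d simp: x)
    then have "vector_derivative (reversepath g) (at x) = - g' (1 - x)"
      unfolding reversepath_def by (simp add: o_def vector_derivative_at)
    moreover have "reversepath g x = g (1 - x)" by (simp add: reversepath_def)
    ultimately show "e \<le> Im (vector_derivative (reversepath g) (at x) * cnj (reversepath g x - z))"
      using b[of "1 - x"] x by simp
  qed
  moreover have "winding_number (reversepath g) z = - winding_number g z"
    using g by (simp add: winding_number_reversepath valid_path_imp_path)
  ultimately show ?thesis by simp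
qed

locale curve =
  fixes \<gamma> :: "real \<Rightarrow> complex" and L :: real
  assumes L_pos: "0 < L" and smooth: "smooth_curve \<gamma>" and periodic: "\<forall>t. \<gamma> (t + L) = \<gamma> t"
    and simple: "inj_on \<gamma> {0..<L}" and arclength: "\<forall>t. norm (tangent \<gamma> t) = 1"
begin

definition "T2 t = vector_derivative (tangent \<gamma>) (at t)"

lemma derivs:
  shows gd: "\<And>t. (\<gamma> has_vector_derivative tangent \<gamma> t) (at t)"
    and td: "\<And>t. (tangent \<gamma> has_vector_derivative T2 t) (at t)"
    and T2c: "continuous_on UNIV T2" and tc: "continuous_on UNIV (tangent \<gamma>)"
    and gc: "continuous_on UNIV \<gamma>"
proof -
  obtain D where D0: "D 0 = \<gamma>" and D: "\<And>k t. (D k has_vector_derivative D (Suc k) t) (at t)"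
    using smooth unfolding smooth_curve_def by blast
  have t1: "tangent \<gamma> = D 1"
    by (rule ext) (metis D D0 One_nat_def tangent_def vector_derivative_at)
  have t2: "T2 = D 2"
    by (rule ext) (metis D t1 T2_def numeral_2_eq_2 One_nat_def vector_derivative_at)
  show "\<And>t. (\<gamma> has_vector_derivative tangent \<gamma> t) (at t)" using D[of 0] D0 t1 by simp
  show "\<And>t. (tangent \<gamma> has_vector_derivative T2 t) (at t)" using D[of 1] t1 t2
    by (simp add: numeral_2_eq_2)
  show "continuous_on UNIV T2" unfolding t2
    by (metis D continuous_at_imp_continuous_on has_vector_derivative_continuous)
  show "continuous_on UNIV (tangent \<gamma>)" unfolding t1
    by (metis D continuous_at_imp_continuous_on has_vector_derivative_continuous)
  show "continuous_on UNIV \<gamma>" 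
    by (metis D D0 continuous_at_imp_continuous_on has_vector_derivative_continuous)
qed

lemma tnorm [simp]: "norm (tangent \<gamma> t) = 1" using arclength by simp

lemma T2_perp: "Re (cnj (tangent \<gamma> t) * T2 t) = 0"
proof -
  have d: "((\<lambda>s. Re (cnj (tangent \<gamma> s) * tangent \<gamma> s)) has_real_derivative 2 * Re (cnj (tangent \<gamma> t) * T2 t)) (at t)"
  proof -
    have "((\<lambda>s. tangent \<gamma> s \<bullet> tangent \<gamma> s) has_derivative (\<lambda>h. tangent \<gamma> t \<bullet> (h *\<^sub>R T2 t) + (h *\<^sub>R T2 t) \<bullet> tangent \<gamma> t)) (at t)"
      using td[of t] unfolding has_vector_derivative_def by (intro derivative_eq_intros) auto
    moreover have "(\<lambda>h. tangent \<gamma> t \<bullet> (h *\<^sub>R T2 t) + (h *\<^sub>R T2 t) \<bullet> tangent \<gamma> t) = (*) (2 * Re (cnj (tangent \<gamma> t) * T2 t))"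
      by (auto simp: inner_complex_def algebra_simps)
    moreover have "\<And>s. tangent \<gamma> s \<bullet> tangent \<gamma> s = Re (cnj (tangent \<gamma> s) * tangent \<gamma> s)"
      by (simp add: inner_complex_def)
    ultimately show ?thesis by (simp add: has_field_derivative_def)
  qed
  have c: "\<And>s. Re (cnj (tangent \<gamma> s) * tangent \<gamma> s) = 1"
    by (metis complex_norm_square mult.commute one_complex.sel(1) one_power2 tnorm Re_complex_of_real)
  have "((\<lambda>s. Re (cnj (tangent \<gamma> s) * tangent \<gamma> s)) has_real_derivative 0) (at t)"
    by (simp only: c) (rule DERIV_const)
  with d show ?thesis using DERIV_unique by fastforce
qed

lemma per_nat: "\<gamma> (s + real n * L) = \<gamma> s"
  by (induction n arbitrary: s) (auto simp: distrib_right periodic add.assoc[symmetric])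

lemma per_int: "\<gamma> (s + of_int k * L) = \<gamma> s"
proof (cases "k \<ge> 0")
  case True
  then show ?thesis using per_nat[of s "nat k"] by simp
next
  case False
  have "\<gamma> (s + of_int k * L + real (nat (-k)) * L) = \<gamma> (s + of_int k * L)" by (rule per_nat)
  moreover have "s + of_int k * L + real (nat (-k)) * L = s" using False by (simp add: algebra_simps)
  ultimately show ?thesis by simp
qed

lemma red: obtains u k where "u \<in> {0..<L}" "s = u + of_int k * L"
proof -
  let ?k = "\<lfloor>s / L\<rfloor>"
  have "of_int ?k \<le> s / L" "s / L < of_int ?k + 1" by linarith+
  then have "of_int ?k * L \<le> s / L * L" "s / L * L < (of_int ?k + 1) * L" using L_pos
    by (intro mult_right_mono mult_strict_right_mono; simp)+
  then have "of_int ?k * L \<le> s" "s < of_int ?k * L + L" using L_pos by (simp_all add: algebra_simps)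
  then show ?thesis using that[of "s - of_int ?k * L" ?k] by auto
qed

lemma eq_mod: assumes "\<gamma> s = \<gamma> s'" shows "\<exists>k::int. s' = s + of_int k * L"
proof -
  obtain u k where u: "u \<in> {0..<L}" "s = u + of_int k * L" by (rule red)
  obtain u' k' where u': "u' \<in> {0..<L}" "s' = u' + of_int k' * L" by (rule red)
  have "\<gamma> u = \<gamma> u'" using assms u u' per_int by simp
  then have "u = u'" using simple u u' by (auto dest: inj_onD)
  then show ?thesis using u u' by (intro exI[of _ "k' - k"]) (simp add: algebra_simps)
qed

definition "loop = (\<lambda>u. \<gamma> (L * u))"

lemma loop_path: "path loop"
  unfolding loop_def path_def
  by (intro continuous_on_compose2[OF gc] continuous_intros) auto

lemma loop_closed: "pathfinish loop = pathstart loop"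
  using periodic[rule_format, of 0] by (simp add: loop_def pathfinish_def pathstart_def)

lemma loop_image: "path_image loop = \<gamma> ` {0..L}"
proof -
  have "(\<lambda>u. L * u) ` {0..1} = {0..L}"
  proof
    show "{0..L} \<subseteq> (\<lambda>u. L * u) ` {0..1}"
    proof
      fix x assume "x \<in> {0..L}"
      then show "x \<in> (\<lambda>u. L * u) ` {0..1}" using L_pos
        by (intro image_eqI[of _ _ "x / L"]) (auto simp: field_simps)
    qed
  qed (use L_pos in auto)
  then show ?thesis unfolding path_image_def loop_def by (metis image_image)
qed

lemma loop_simple: "simple_path loop"
  unfolding simple_path_def loop_free_def
proof (intro conjI loop_path ballI impI)
  fix x y :: real assume xy: "x \<in> {0..1}" "y \<in> {0..1}" "loop x = loop y"
  then obtain k :: int where k: "L * y = L * x + of_int k * L" using eq_mod unfolding loop_def by blast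
  then have "y = x + of_int k" using L_pos by (simp add: algebra_simps) (metis mult.commute distrib_left mult_cancel_left order_less_irrefl)
  then have "k \<in> {-1, 0, 1}" using xy by auto
  then show "x = y \<or> x = 0 \<and> y = 1 \<or> x = 1 \<and> y = 0" using xy \<open>y = x + of_int k\<close> by auto
qed

definition "hloop c = (\<lambda>x. \<gamma> (c + L * x))"

lemma hloop_shift: obtains a where "a \<in> {0..1}" "\<And>x. x \<in> {0..1} \<Longrightarrow> hloop c x = shiftpath a loop x"
proof -
  obtain u k where u: "u \<in> {0..<L}" "c = u + of_int k * L" by (rule red)
  show ?thesis
  proof (rule that[of "u / L"])
    show "u / L \<in> {0..1}" using u L_pos by auto
    fix x :: real
    have e1: "L * (u / L + x) = u + L * x" using L_pos by (simp add: field_simps)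
    have "L * (u / L + x - 1) + of_int 1 * L = u + L * x" using L_pos by (simp add: field_simps)
    then have e2: "\<gamma> (L * (u / L + x - 1)) = \<gamma> (u + L * x)"
      using per_int[of "L * (u / L + x - 1)" 1] by simp
    have e3: "\<gamma> (c + L * x) = \<gamma> (u + L * x)"
      using per_int[of "u + L * x" k] u by (simp add: algebra_simps)
    show "hloop c x = shiftpath (u / L) loop x"
      unfolding hloop_def shiftpath_def loop_def using e1 e2 e3 by simp
  qed
qed

lemma hloop_facts:
  shows "path (hloop c)" "pathfinish (hloop c) = pathstart (hloop c)"
    "path_image (hloop c) = path_image loop"
    "\<And>z. z \<notin> path_image loop \<Longrightarrow> winding_number (hloop c) z = winding_number loop z"
proof -
  show "path (hloop c)"
    unfolding hloop_def path_def
    by (intro continuous_on_compose2[OF gc] continuous_intros) auto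
  show "pathfinish (hloop c) = pathstart (hloop c)"
    using periodic[rule_format, of c] by (simp add: hloop_def pathfinish_def pathstart_def)
  obtain a where a: "a \<in> {0..1}" "\<And>x. x \<in> {0..1} \<Longrightarrow> hloop c x = shiftpath a loop x"
    using hloop_shift[of c] by blast
  have "path_image (hloop c) = path_image (shiftpath a loop)"
    unfolding path_image_def using a(2) by auto
  then show pi: "path_image (hloop c) = path_image loop"
    using path_image_shiftpath[OF a(1) loop_closed] by simp
  fix z assume z: "z \<notin> path_image loop"
  have "winding_number (hloop c) z = winding_number (shiftpath a loop) z"
    by (rule winding_number_cong) (use a in auto)
  also have "\<dots> = winding_number loop z"
    by (rule winding_number_shiftpath[OF loop_path z loop_closed a(1)])
  finally show "winding_number (hloop c) z = winding_number loop z" .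
qed

lemma gamma_in_image: "\<gamma> s \<in> path_image loop"
proof -
  obtain u k where u: "u \<in> {0..<L}" "s = u + of_int k * L" by (rule red)
  then show ?thesis using per_int[of u k] by (auto simp: loop_image)
qed

lemma cnjT: "cnj (tangent \<gamma> t) * tangent \<gamma> t = 1"
  using complex_norm_square[of "tangent \<gamma> t"] by (simp add: mult.commute)

lemma decomp: "u = of_real (Re (cnj T * u)) * T + of_real (Im (cnj T * u)) * (\<i> * T)" if "cnj T * T = 1" for T u :: complex
proof -
  have "u = (cnj T * u) * T" using that by (metis mult.assoc mult.commute mult.left_neutral)
  also have "cnj T * u = of_real (Re (cnj T * u)) + \<i> * of_real (Im (cnj T * u))"
    by (simp add: complex_eq_iff)
  finally show ?thesis by (simp add: algebra_simps)
qed

lemma dist_deriv: "((\<lambda>u. (c - \<gamma> u) \<bullet> (c - \<gamma> u)) has_real_derivative - 2 * ((c - \<gamma> s) \<bullet> tangent \<gamma> s)) (at s)"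
proof -
  have "((\<lambda>u. (c - \<gamma> u) \<bullet> (c - \<gamma> u)) has_derivative (\<lambda>h. (c - \<gamma> s) \<bullet> (- (h *\<^sub>R tangent \<gamma> s)) + (- (h *\<^sub>R tangent \<gamma> s)) \<bullet> (c - \<gamma> s))) (at s)"
    using gd[of s] unfolding has_vector_derivative_def by (intro derivative_eq_intros) auto
  moreover have "(\<lambda>h. (c - \<gamma> s) \<bullet> (- (h *\<^sub>R tangent \<gamma> s)) + (- (h *\<^sub>R tangent \<gamma> s)) \<bullet> (c - \<gamma> s)) = (*) (- 2 * ((c - \<gamma> s) \<bullet> tangent \<gamma> s))"
    by (auto simp: inner_commute algebra_simps)
  ultimately show ?thesis by (simp add: has_field_derivative_def)
qed

lemma near_Or:
  assumes d: "norm (c - \<gamma> s) \<le> r"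
  shows "c \<in> Omega_r_closed \<gamma> r"
proof -
  let ?f = "\<lambda>u. (c - \<gamma> u) \<bullet> (c - \<gamma> u)"
  have "continuous_on {0..L} ?f"
    by (intro continuous_intros continuous_on_subset[OF gc]) auto
  then obtain s0 where s0: "s0 \<in> {0..L}" "\<And>y. y \<in> {0..L} \<Longrightarrow> ?f s0 \<le> ?f y"
    using continuous_attains_inf[of "{0..L}" ?f] L_pos by auto
  have glob: "?f s0 \<le> ?f y" for y
  proof -
    obtain u k where u: "u \<in> {0..<L}" "y = u + of_int k * L" by (rule red)
    then show ?thesis using s0(2)[of u] per_int[of u k] by auto
  qed
  have "- 2 * ((c - \<gamma> s0) \<bullet> tangent \<gamma> s0) = 0"
    by (rule DERIV_local_min[OF dist_deriv, of 1]) (use glob in auto)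
  then have z: "Re (cnj (tangent \<gamma> s0) * (c - \<gamma> s0)) = 0"
    by (simp add: inner_complex_def algebra_simps)
  define b where "b = Im (cnj (tangent \<gamma> s0) * (c - \<gamma> s0))"
  have ceq: "c - \<gamma> s0 = of_real b * (\<i> * tangent \<gamma> s0)"
  proof -
    have "c - \<gamma> s0 = of_real 0 * tangent \<gamma> s0 + of_real b * (\<i> * tangent \<gamma> s0)"
      using decomp[OF cnjT, of "c - \<gamma> s0" s0] unfolding z b_def[symmetric] .
    then show ?thesis by (simp only: of_real_0 mult_zero_left add_0)
  qed
  have "norm (c - \<gamma> s0) = \<bar>b\<bar>" using ceq by (simp add: norm_mult)
  moreover have "norm (c - \<gamma> s0) \<le> norm (c - \<gamma> s)"
    using glob[of s] by (metis dot_square_norm norm_ge_zero power2_le_imp_le)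
  ultimately have "\<bar>b\<bar> \<le> r" using d by simp
  moreover have "c = offset \<gamma> b s0"
    using ceq by (simp add: offset_def normal_def algebra_simps)
  ultimately show ?thesis unfolding Omega_r_closed_def by auto
qed

definition "Xf t u = Re (cnj (tangent \<gamma> t) * (\<gamma> u - \<gamma> t))"
definition "Yf t u = Im (cnj (tangent \<gamma> t) * (\<gamma> u - \<gamma> t))"

lemma XY_deriv:
  shows "(Xf t has_real_derivative Re (cnj (tangent \<gamma> t) * tangent \<gamma> u)) (at u)"
    and "(Yf t has_real_derivative Im (cnj (tangent \<gamma> t) * tangent \<gamma> u)) (at u)"
proof -
  have h: "((\<lambda>u. cnj (tangent \<gamma> t) * (\<gamma> u - \<gamma> t)) has_vector_derivative cnj (tangent \<gamma> t) * tangent \<gamma> u) (at u)"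
    using gd[of u] by (auto intro!: derivative_eq_intros)
  show "(Xf t has_real_derivative Re (cnj (tangent \<gamma> t) * tangent \<gamma> u)) (at u)"
    using bounded_linear.has_vector_derivative[OF bounded_linear_Re h]
    unfolding Xf_def has_real_derivative_iff_has_vector_derivative by simp
  show "(Yf t has_real_derivative Im (cnj (tangent \<gamma> t) * tangent \<gamma> u)) (at u)"
    using bounded_linear.has_vector_derivative[OF bounded_linear_Im h]
    unfolding Yf_def has_real_derivative_iff_has_vector_derivative by simp
qed

lemma local_frame:
  obtains \<eta> where "0 < \<eta>" "4 * \<eta> < L"
    "\<And>u1 u2. t - \<eta> \<le> u1 \<Longrightarrow> u1 \<le> u2 \<Longrightarrow> u2 \<le> t + \<eta> \<Longrightarrow>
        (u2 - u1) / 2 \<le> Xf t u2 - Xf t u1 \<and> Xf t u2 - Xf t u1 \<le> u2 - u1 \<and> \<bar>Yf t u2 - Yf t u1\<bar> \<le> (u2 - u1) / 2"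
    "\<And>u. \<bar>u - t\<bar> \<le> \<eta> \<Longrightarrow> 1/2 \<le> Re (cnj (tangent \<gamma> t) * tangent \<gamma> u) \<and> \<bar>Im (cnj (tangent \<gamma> t) * tangent \<gamma> u)\<bar> \<le> 1/2"
proof -
  have "isCont (tangent \<gamma>) t" using tc by (simp add: continuous_on_eq_continuous_at)
  then obtain d where d: "d > 0" "\<And>u. dist u t < d \<Longrightarrow> dist (tangent \<gamma> u) (tangent \<gamma> t) < 1/2"
    unfolding continuous_at_eps_delta by (metis divide_pos_pos zero_less_one zero_less_numeral)
  define \<eta> where "\<eta> = min (d / 2) (L / 8)"
  have \<eta>: "0 < \<eta>" "4 * \<eta> < L" "\<eta> < d" using d L_pos by (auto simp: \<eta>_def)
  let ?w = "cnj (tangent \<gamma> t)"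
  have bnd: "1/2 \<le> Re (?w * tangent \<gamma> u) \<and> Re (?w * tangent \<gamma> u) \<le> 1 \<and> \<bar>Im (?w * tangent \<gamma> u)\<bar> \<le> 1/2"
    if "\<bar>u - t\<bar> \<le> \<eta>" for u
  proof -
    have "norm (tangent \<gamma> u - tangent \<gamma> t) < 1/2" using d(2)[of u] that \<eta> by (auto simp: dist_norm)
    moreover have "?w * tangent \<gamma> u - 1 = ?w * (tangent \<gamma> u - tangent \<gamma> t)"
      using cnjT[of t] by (simp add: right_diff_distrib)
    ultimately have n: "norm (?w * tangent \<gamma> u - 1) < 1/2"
      by (simp add: norm_mult)
    have n1: "norm (?w * tangent \<gamma> u) = 1" by (simp add: norm_mult)
    have "\<bar>Re (?w * tangent \<gamma> u - 1)\<bar> < 1/2" "\<bar>Im (?w * tangent \<gamma> u - 1)\<bar> < 1/2"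
      using n abs_Re_le_cmod[of "?w * tangent \<gamma> u - 1"] abs_Im_le_cmod[of "?w * tangent \<gamma> u - 1"] by linarith+
    moreover have "Re (?w * tangent \<gamma> u) \<le> 1" using n1 complex_Re_le_cmod[of "?w * tangent \<gamma> u"] by simp
    ultimately show ?thesis by simp
  qed
  show ?thesis
  proof (rule that[OF \<eta>(1,2)])
    show "\<And>u. \<bar>u - t\<bar> \<le> \<eta> \<Longrightarrow> 1/2 \<le> Re (?w * tangent \<gamma> u) \<and> \<bar>Im (?w * tangent \<gamma> u)\<bar> \<le> 1/2"
      using bnd by blast
  next
    fix u1 u2 assume u: "t - \<eta> \<le> u1" "u1 \<le> u2" "u2 \<le> t + \<eta>"
    show "(u2 - u1) / 2 \<le> Xf t u2 - Xf t u1 \<and> Xf t u2 - Xf t u1 \<le> u2 - u1 \<and> \<bar>Yf t u2 - Yf t u1\<bar> \<le> (u2 - u1) / 2"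
    proof (cases "u1 = u2")
      case True then show ?thesis by simp
    next
      case False
      then have lt: "u1 < u2" using u by simp
      obtain z1 where z1: "u1 < z1" "z1 < u2" "Xf t u2 - Xf t u1 = (u2 - u1) * Re (?w * tangent \<gamma> z1)"
        using MVT2[OF lt XY_deriv(1)] by blast
      obtain z2 where z2: "u1 < z2" "z2 < u2" "Yf t u2 - Yf t u1 = (u2 - u1) * Im (?w * tangent \<gamma> z2)"
        using MVT2[OF lt XY_deriv(2)] by blast
      have b1: "1/2 \<le> Re (?w * tangent \<gamma> z1)" "Re (?w * tangent \<gamma> z1) \<le> 1" using bnd[of z1] z1 u by auto
      have b2: "\<bar>Im (?w * tangent \<gamma> z2)\<bar> \<le> 1/2" using bnd[of z2] z2 u by auto
      have "(u2 - u1) / 2 \<le> (u2 - u1) * Re (?w * tangent \<gamma> z1)"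
        using b1 lt by (simp add: mult_left_mono[of "1/2" _ "u2 - u1", simplified])
      moreover have "(u2 - u1) * Re (?w * tangent \<gamma> z1) \<le> u2 - u1"
        using b1 lt mult_left_mono[of _ 1 "u2 - u1"] by simp
      moreover have "\<bar>(u2 - u1) * Im (?w * tangent \<gamma> z2)\<bar> \<le> (u2 - u1) / 2"
        using b2 lt by (simp add: abs_mult mult_left_mono[of _ "1/2" "u2 - u1", simplified])
      ultimately show ?thesis using z1 z2 by simp
    qed
  qed
qed

end

locale dom = curve +
  fixes \<Omega> :: "complex set"
  assumes Oopen: "open \<Omega>" and Oconn: "connected \<Omega>"
    and boundary: "frontier \<Omega> = \<gamma> ` {0..L}"
    and ccw: "\<forall>z\<in>\<Omega>. winding_number (\<lambda>u. \<gamma> (L * u)) z = 1"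
begin

lemma ccw': "z \<in> \<Omega> \<Longrightarrow> winding_number loop z = 1"
  using ccw by (simp add: loop_def)

lemma front: "frontier \<Omega> = path_image loop" using boundary loop_image by simp

lemma O_disj: "\<Omega> \<inter> path_image loop = {}"
  using front Oopen by (metis frontier_def interior_open Diff_disjoint)

lemma gamma_notin: "\<gamma> s \<notin> \<Omega>" using O_disj gamma_in_image by blast

lemmas J = Jordan_inside_outside[OF loop_simple loop_closed]

lemma O_inside: "\<Omega> = inside (path_image loop)"
proof
  show "\<Omega> \<subseteq> inside (path_image loop)"
  proof
    fix z assume z: "z \<in> \<Omega>"
    then have "z \<notin> outside (path_image loop)"
      using ccw'[OF z] winding_number_zero_in_outside[OF loop_path loop_closed] by auto
    moreover have "z \<notin> path_image loop" using z O_disj by blast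
    ultimately show "z \<in> inside (path_image loop)" using J by blast
  qed
  then have sub: "\<Omega> \<subseteq> inside (path_image loop)" .
  have ne: "\<Omega> \<noteq> {}" using front gamma_in_image by (metis empty_iff frontier_empty)
  let ?I = "inside (path_image loop)"
  have "closure \<Omega> = \<Omega> \<union> path_image loop" using front
    by (metis Oopen closure_Un_frontier)
  then have "?I - \<Omega> = ?I \<inter> - closure \<Omega>" using J by blast
  have "\<Omega> \<inter> ?I = {} \<or> (- closure \<Omega>) \<inter> ?I = {}"
  proof (rule connectedD)
    show "connected ?I" using J by blast
    show "open \<Omega>" by (rule Oopen)
    show "open (- closure \<Omega>)" by auto
    show "\<Omega> \<inter> - closure \<Omega> \<inter> ?I = {}" using closure_subset by blast
    show "?I \<subseteq> \<Omega> \<union> - closure \<Omega>" using \<open>?I - \<Omega> = ?I \<inter> - closure \<Omega>\<close> by blast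
  qed
  then show "?I \<subseteq> \<Omega>" using sub ne \<open>?I - \<Omega> = ?I \<inter> - closure \<Omega>\<close> by blast
qed

lemma sphere_not_in:
  assumes r: "0 < r" and d: "norm (c - \<gamma> s) \<le> r"
  shows "\<not> sphere c r \<subseteq> \<Omega>"
proof
  assume S: "sphere c r \<subseteq> \<Omega>"
  have gs: "\<gamma> s \<in> path_image loop" by (rule gamma_in_image)
  have "\<gamma> s \<notin> sphere c r" using S gamma_notin by blast
  then have gb: "\<gamma> s \<in> ball c r" using d by (auto simp: dist_norm norm_minus_commute)
  have disj: "sphere c r \<inter> path_image loop = {}" using S O_disj by blast
  have "ball c r \<inter> path_image loop = {} \<or> (- cball c r) \<inter> path_image loop = {}"
  proof (rule connectedD)
    show "connected (path_image loop)" by (rule connected_path_image[OF loop_path])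
    show "path_image loop \<subseteq> ball c r \<union> - cball c r" using disj by (auto simp: sphere_def ball_def cball_def)
  qed auto
  then have "(- cball c r) \<inter> path_image loop = {}" using gs gb by blast
  have sub: "path_image loop \<subseteq> ball c r"
  proof
    fix x assume x: "x \<in> path_image loop"
    then have "dist c x \<le> r" "dist c x \<noteq> r"
      using \<open>(- cball c r) \<inter> path_image loop = {}\<close> disj by auto
    then show "x \<in> ball c r" by simp
  qed
  have zs: "c + of_real r \<in> sphere c r" using r by (simp add: dist_norm)
  then have "winding_number loop (c + of_real r) = 0"
    by (intro winding_number_zero_outside[OF loop_path convex_ball loop_closed _ sub]) (auto simp: dist_norm)
  moreover have "winding_number loop (c + of_real r) = 1" using zs S ccw' by blast
  ultimately show False by simp
qed

end

locale sloc = dom +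
  fixes t \<eta> :: real
  assumes eta: "0 < \<eta>" "4 * \<eta> < L"
    and incr: "\<And>u1 u2. t - \<eta> \<le> u1 \<Longrightarrow> u1 \<le> u2 \<Longrightarrow> u2 \<le> t + \<eta> \<Longrightarrow>
        (u2 - u1) / 2 \<le> Xf t u2 - Xf t u1 \<and> Xf t u2 - Xf t u1 \<le> u2 - u1 \<and> \<bar>Yf t u2 - Yf t u1\<bar> \<le> (u2 - u1) / 2"
    and bnd: "\<And>u. \<bar>u - t\<bar> \<le> \<eta> \<Longrightarrow> 1/2 \<le> Re (cnj (tangent \<gamma> t) * tangent \<gamma> u) \<and> \<bar>Im (cnj (tangent \<gamma> t) * tangent \<gamma> u)\<bar> \<le> 1/2"
begin

definition "w0 = cnj (tangent \<gamma> t)"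
definition "loc z = w0 * (z - \<gamma> t)"
definition "Aarc x = \<gamma> (t - \<eta> + 2 * \<eta> * x)"
definition "p0 = \<gamma> (t - \<eta>)"
definition "q0 = \<gamma> (t + \<eta>)"
definition "Hv = of_real (4 * \<eta>) * normal \<gamma> t"
definition "leg1 = linepath q0 (q0 - Hv)"
definition "botm = linepath (q0 - Hv) (p0 - Hv)"
definition "leg2 = linepath (p0 - Hv) p0"
definition "Rp = leg1 +++ (botm +++ leg2)"
definition "Pp = Aarc +++ Rp"
definition "Bp = subpath (2 * \<eta> / L) 1 (hloop (t - \<eta>))"
definition "Qp = reversepath Rp +++ Bp"
definition "Xq = Xf t (t + \<eta>)"
definition "Xp = Xf t (t - \<eta>)"
definition "Yq = Yf t (t + \<eta>)"
definition "Yp = Yf t (t - \<eta>)"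

lemma XY0: "Xf t t = 0" "Yf t t = 0" by (simp_all add: Xf_def Yf_def)

lemma Xu:
  assumes "t - \<eta> \<le> u" "u \<le> t + \<eta>"
  shows "t \<le> u \<Longrightarrow> (u - t) / 2 \<le> Xf t u" "u \<le> t \<Longrightarrow> Xf t u \<le> (u - t) / 2"
    "\<bar>Xf t u\<bar> \<le> \<eta>" "\<bar>Yf t u\<bar> \<le> \<eta> / 2"
proof -
  show "t \<le> u \<Longrightarrow> (u - t) / 2 \<le> Xf t u" using incr[of t u] assms eta XY0 by auto
  show "u \<le> t \<Longrightarrow> Xf t u \<le> (u - t) / 2" using incr[of u t] assms eta XY0 by auto
  show "\<bar>Xf t u\<bar> \<le> \<eta>"
    using incr[of t u] incr[of u t] assms eta XY0 by (cases "t \<le> u") auto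
  show "\<bar>Yf t u\<bar> \<le> \<eta> / 2"
    using incr[of t u] incr[of u t] assms eta XY0 by (cases "t \<le> u") auto
qed

lemma Xmono: "t - \<eta> \<le> u1 \<Longrightarrow> u1 < u2 \<Longrightarrow> u2 \<le> t + \<eta> \<Longrightarrow> Xf t u1 < Xf t u2"
  using incr[of u1 u2] by auto

lemma XpXq: "\<eta> / 2 \<le> Xq" "Xp \<le> - \<eta> / 2" "\<bar>Yq\<bar> \<le> \<eta> / 2" "\<bar>Yp\<bar> \<le> \<eta> / 2"
  using Xu[of "t + \<eta>"] Xu[of "t - \<eta>"] eta by (auto simp: Xq_def Xp_def Yq_def Yp_def)

lemma w0_unit: "w0 * tangent \<gamma> t = 1" "norm w0 = 1"
  using cnjT[of t] by (auto simp: w0_def)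

lemma loc_gamma: "Re (loc (\<gamma> u)) = Xf t u" "Im (loc (\<gamma> u)) = Yf t u"
  by (simp_all add: loc_def Xf_def Yf_def w0_def)

lemma loc_Hv: "loc (z - Hv) = loc z - \<i> * of_real (4 * \<eta>)"
proof -
  have "w0 * Hv = \<i> * of_real (4 * \<eta>)"
    using w0_unit(1) by (simp add: Hv_def normal_def algebra_simps)
  then show ?thesis by (simp add: loc_def algebra_simps)
qed

lemma loc_comb: "loc ((1 - u) *\<^sub>R a + u *\<^sub>R b) = (1 - u) *\<^sub>R loc a + u *\<^sub>R loc b"
  by (simp add: loc_def scaleR_conv_of_real algebra_simps)

lemma loc_inj: "loc z = loc z' \<Longrightarrow> z = z'"
  using w0_unit(2) by (auto simp: loc_def)

lemma loc_gt: "loc (\<gamma> t) = 0" by (simp add: loc_def)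

lemma A_img: "path_image Aarc = \<gamma> ` {t - \<eta>..t + \<eta>}"
proof -
  have "(\<lambda>x. t - \<eta> + 2 * \<eta> * x) ` {0..1} = {t - \<eta>..t + \<eta>}"
  proof
    show "{t - \<eta>..t + \<eta>} \<subseteq> (\<lambda>x. t - \<eta> + 2 * \<eta> * x) ` {0..1}"
    proof
      fix u assume "u \<in> {t - \<eta>..t + \<eta>}"
      then show "u \<in> (\<lambda>x. t - \<eta> + 2 * \<eta> * x) ` {0..1}" using eta
        by (intro image_eqI[of _ _ "(u - t + \<eta>) / (2 * \<eta>)"]) (auto simp: field_simps)
    qed
  next
    show "(\<lambda>x. t - \<eta> + 2 * \<eta> * x) ` {0..1} \<subseteq> {t - \<eta>..t + \<eta>}"
    proof
      fix y assume "y \<in> (\<lambda>x. t - \<eta> + 2 * \<eta> * x) ` {0..1}"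
      then obtain x where x: "0 \<le> x" "x \<le> 1" "y = t - \<eta> + 2 * \<eta> * x" by auto
      have "0 \<le> \<eta> * x" "\<eta> * x \<le> \<eta>" using x eta by (auto intro: mult_right_le_one_le)
      then show "y \<in> {t - \<eta>..t + \<eta>}" using x by auto
    qed
  qed
  then show ?thesis unfolding path_image_def Aarc_def by (metis image_image)
qed

lemma seg_loc:
  assumes "w \<in> closed_segment a b"
  obtains u where "0 \<le> u" "u \<le> 1" "Re (loc w) = (1 - u) * Re (loc a) + u * Re (loc b)"
    "Im (loc w) = (1 - u) * Im (loc a) + u * Im (loc b)" "w = (1 - u) *\<^sub>R a + u *\<^sub>R b"
proof -
  obtain u where u: "0 \<le> u" "u \<le> 1" "w = (1 - u) *\<^sub>R a + u *\<^sub>R b" using assms in_segment(1) by blast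
  then show ?thesis using that[of u] loc_comb[of u a b] by simp
qed

lemma bot_img:
  assumes "w \<in> closed_segment (q0 - Hv) (p0 - Hv)"
  shows "Xp \<le> Re (loc w) \<and> Re (loc w) \<le> Xq \<and> Im (loc w) \<le> \<eta> / 2 - 4 * \<eta>"
proof -
  have lq: "Re (loc q0) = Xq" "Im (loc q0) = Yq" "Re (loc p0) = Xp" "Im (loc p0) = Yp"
    by (simp_all add: q0_def p0_def loc_gamma Xq_def Yq_def Xp_def Yp_def)
  have lH: "Re (loc (z - Hv)) = Re (loc z)" "Im (loc (z - Hv)) = Im (loc z) - 4 * \<eta>" for z
    by (simp_all add: loc_Hv)
  obtain u where u: "0 \<le> u" "u \<le> 1" "Re (loc w) = (1 - u) * Re (loc (q0 - Hv)) + u * Re (loc (p0 - Hv))"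
      "Im (loc w) = (1 - u) * Im (loc (q0 - Hv)) + u * Im (loc (p0 - Hv))" using assms by (rule seg_loc)
    have "Xp \<le> Xq" using XpXq eta by linarith
    have "Re (loc w) = Xq + u * (Xp - Xq)" using u lq lH by (simp add: algebra_simps)
    moreover have "u * (Xp - Xq) \<le> 0" using u(1,2) \<open>Xp \<le> Xq\<close> by (auto intro: mult_nonneg_nonpos)
    moreover have "0 \<le> (1 - u) * (Xq - Xp)" using u(1,2) \<open>Xp \<le> Xq\<close> by auto
    then have "(Xp - Xq) \<le> u * (Xp - Xq)" by (simp add: algebra_simps)
    ultimately have "Xp \<le> Re (loc w) \<and> Re (loc w) \<le> Xq" by linarith
    moreover have "Im (loc w) \<le> \<eta> / 2 - 4 * \<eta>"
    proof -
      have "(1 - u) * Yq \<le> (1 - u) * (\<eta> / 2)" "u * Yp \<le> u * (\<eta> / 2)"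
        using u(1,2) XpXq by (intro mult_left_mono; auto)+
      then show ?thesis using u lq lH by (simp add: algebra_simps)
    qed
    ultimately show ?thesis by simp
qed

lemma R_img:
  assumes "w \<in> path_image Rp"
  shows "(Re (loc w) = Xq \<and> Yq - 4 * \<eta> \<le> Im (loc w) \<and> Im (loc w) \<le> Yq) \<or>
         (Re (loc w) = Xp \<and> Yp - 4 * \<eta> \<le> Im (loc w) \<and> Im (loc w) \<le> Yp) \<or>
         (Xp \<le> Re (loc w) \<and> Re (loc w) \<le> Xq \<and> Im (loc w) \<le> \<eta> / 2 - 4 * \<eta>)"
proof -
  have lq: "Re (loc q0) = Xq" "Im (loc q0) = Yq" "Re (loc p0) = Xp" "Im (loc p0) = Yp"
    by (simp_all add: q0_def p0_def loc_gamma Xq_def Yq_def Xp_def Yp_def)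
  have lH: "Re (loc (z - Hv)) = Re (loc z)" "Im (loc (z - Hv)) = Im (loc z) - 4 * \<eta>" for z
    by (simp_all add: loc_Hv)
  have "w \<in> closed_segment q0 (q0 - Hv) \<or> w \<in> closed_segment (q0 - Hv) (p0 - Hv) \<or> w \<in> closed_segment (p0 - Hv) p0"
    using assms by (auto simp: Rp_def leg1_def botm_def leg2_def path_image_join)
  then show ?thesis
  proof (elim disjE)
    assume "w \<in> closed_segment q0 (q0 - Hv)"
    then obtain u where "0 \<le> u" "u \<le> 1" "Re (loc w) = (1 - u) * Re (loc q0) + u * Re (loc (q0 - Hv))"
      "Im (loc w) = (1 - u) * Im (loc q0) + u * Im (loc (q0 - Hv))" by (rule seg_loc)
    moreover have "0 \<le> u * \<eta>" "u * \<eta> \<le> \<eta>" using \<open>0 \<le> u\<close> \<open>u \<le> 1\<close> eta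
      by (auto intro: mult_left_le_one_le)
    ultimately have "Re (loc w) = Xq" "Im (loc w) = Yq - 4 * (u * \<eta>)" using lq lH
      by (simp_all add: algebra_simps)
    then show ?thesis using \<open>0 \<le> u * \<eta>\<close> \<open>u * \<eta> \<le> \<eta>\<close> by simp
  next
    assume "w \<in> closed_segment (p0 - Hv) p0"
    then obtain u where "0 \<le> u" "u \<le> 1" "Re (loc w) = (1 - u) * Re (loc (p0 - Hv)) + u * Re (loc p0)"
      "Im (loc w) = (1 - u) * Im (loc (p0 - Hv)) + u * Im (loc p0)" by (rule seg_loc)
    moreover have "0 \<le> u * \<eta>" "u * \<eta> \<le> \<eta>" using \<open>0 \<le> u\<close> \<open>u \<le> 1\<close> eta
      by (auto intro: mult_left_le_one_le)
    ultimately have "Re (loc w) = Xp" "Im (loc w) = Yp - 4 * \<eta> + 4 * (u * \<eta>)" using lq lH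
      by (simp_all add: algebra_simps)
    then show ?thesis using \<open>0 \<le> u * \<eta>\<close> \<open>u * \<eta> \<le> \<eta>\<close> by simp
  next
    assume "w \<in> closed_segment (q0 - Hv) (p0 - Hv)"
    then show ?thesis using bot_img by blast
  qed
qed

lemma Xinj: "t - \<eta> \<le> u1 \<Longrightarrow> u1 \<le> t + \<eta> \<Longrightarrow> t - \<eta> \<le> u2 \<Longrightarrow> u2 \<le> t + \<eta> \<Longrightarrow> Xf t u1 = Xf t u2 \<Longrightarrow> u1 = u2"
  using Xmono[of u1 u2] Xmono[of u2 u1] by (cases u1 u2 rule: linorder_cases) auto

lemma A_deriv: "(Aarc has_vector_derivative (2 * \<eta>) *\<^sub>R tangent \<gamma> (t - \<eta> + 2 * \<eta> * x)) (at x)"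
proof -
  have "((\<gamma> \<circ> (\<lambda>x. t - \<eta> + 2 * \<eta> * x)) has_vector_derivative (2 * \<eta>) *\<^sub>R tangent \<gamma> (t - \<eta> + 2 * \<eta> * x)) (at x)"
    by (rule vector_diff_chain_at) (auto intro!: derivative_eq_intros gd)
  then show ?thesis by (simp add: o_def Aarc_def[abs_def])
qed

lemma A_C1: "Aarc C1_differentiable_on {0..1}"
proof -
  have "continuous_on {0..1} (\<lambda>x. (2 * \<eta>) *\<^sub>R tangent \<gamma> (t - \<eta> + 2 * \<eta> * x))"
    by (intro continuous_intros continuous_on_compose2[OF tc]) auto
  then show ?thesis unfolding C1_differentiable_on_def
    by (intro exI[of _ "\<lambda>x. (2 * \<eta>) *\<^sub>R tangent \<gamma> (t - \<eta> + 2 * \<eta> * x)"]) (simp add: A_deriv)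
qed

lemma A_valid: "valid_path Aarc"
  unfolding valid_path_def by (rule C1_differentiable_imp_piecewise[OF A_C1])

lemma A_path: "path Aarc" using A_valid valid_path_imp_path by blast

lemma A_ends: "pathstart Aarc = p0" "pathfinish Aarc = q0"
  by (simp_all add: pathstart_def pathfinish_def Aarc_def p0_def q0_def algebra_simps)

lemma A_arc: "arc Aarc"
  unfolding arc_def
proof (intro conjI A_path inj_onI)
  fix x y :: real assume x: "x \<in> {0..1}" and y: "y \<in> {0..1}" and e: "Aarc x = Aarc y"
  have r: "t - \<eta> \<le> t - \<eta> + 2 * \<eta> * z \<and> t - \<eta> + 2 * \<eta> * z \<le> t + \<eta>" if "z \<in> {0..1}" for z
  proof -
    have "0 \<le> \<eta> * z" "\<eta> * z \<le> \<eta>" using that eta by (auto intro: mult_left_le_one_le)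
    then show ?thesis by simp
  qed
  have "Xf t (t - \<eta> + 2 * \<eta> * x) = Xf t (t - \<eta> + 2 * \<eta> * y)"
    using e by (simp add: Aarc_def Xf_def)
  then have "t - \<eta> + 2 * \<eta> * x = t - \<eta> + 2 * \<eta> * y"
    using Xinj r[OF x] r[OF y] by blast
  then show "x = y" using eta by simp
qed

lemma A_sub: "Aarc = subpath 0 (2 * \<eta> / L) (hloop (t - \<eta>))"
  using L_pos by (auto simp: subpath_def hloop_def Aarc_def fun_eq_iff field_simps)

lemma Hv_nz: "Hv \<noteq> 0" using eta w0_unit by (auto simp: Hv_def normal_def)

lemma pq_ne: "p0 \<noteq> q0"
proof
  assume "p0 = q0"
  then have "Xp = Xq" by (simp add: p0_def q0_def Xp_def Xq_def Xf_def)
  then show False using XpXq eta by linarith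
qed

lemma lq: "Re (loc q0) = Xq" "Im (loc q0) = Yq" "Re (loc p0) = Xp" "Im (loc p0) = Yp"
  by (simp_all add: q0_def p0_def loc_gamma Xq_def Yq_def Xp_def Yp_def)

lemma lH: "Re (loc (z - Hv)) = Re (loc z)" "Im (loc (z - Hv)) = Im (loc z) - 4 * \<eta>"
  by (simp_all add: loc_Hv)

lemma R_arc: "arc Rp"
proof -
  have Xne: "Xp \<noteq> Xq" using XpXq eta by linarith
  have a2: "arc (botm +++ leg2)"
  proof (rule arc_join)
    show "arc botm" unfolding botm_def using pq_ne by simp
    show "arc leg2" unfolding leg2_def using Hv_nz by simp
    show "pathfinish botm = pathstart leg2" by (simp add: botm_def leg2_def)
    show "path_image botm \<inter> path_image leg2 \<subseteq> {pathstart leg2}"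
    proof
      fix w assume w: "w \<in> path_image botm \<inter> path_image leg2"
      then obtain u where u: "0 \<le> u" "u \<le> 1" "Re (loc w) = (1 - u) * Re (loc (p0 - Hv)) + u * Re (loc p0)"
        by (auto simp: leg2_def elim!: seg_loc)
      obtain v where v: "0 \<le> v" "v \<le> 1" "Re (loc w) = (1 - v) * Re (loc (q0 - Hv)) + v * Re (loc (p0 - Hv))"
        "w = (1 - v) *\<^sub>R (q0 - Hv) + v *\<^sub>R (p0 - Hv)"
        using w by (auto simp: botm_def elim!: seg_loc)
      have "(1 - v) * (Xq - Xp) = 0" using u v lq lH by (simp add: algebra_simps)
      then have "v = 1" using Xne by simp
      then show "w \<in> {pathstart leg2}" using v by (simp add: leg2_def)
    qed
  qed
  show ?thesis unfolding Rp_def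
  proof (rule arc_join[OF _ a2])
    show "arc leg1" unfolding leg1_def using Hv_nz by simp
    show "pathfinish leg1 = pathstart (botm +++ leg2)" by (simp add: botm_def leg1_def)
    show "path_image leg1 \<inter> path_image (botm +++ leg2) \<subseteq> {pathstart (botm +++ leg2)}"
    proof
      fix w assume w: "w \<in> path_image leg1 \<inter> path_image (botm +++ leg2)"
      then obtain u where u: "0 \<le> u" "u \<le> 1" "Re (loc w) = (1 - u) * Re (loc q0) + u * Re (loc (q0 - Hv))"
        by (auto simp: leg1_def elim!: seg_loc)
      then have rw: "Re (loc w) = Xq" using lq lH by (simp add: algebra_simps)
      have "w \<in> path_image botm \<or> w \<in> path_image leg2"
        using w by (auto simp: path_image_join botm_def leg2_def)
      then show "w \<in> {pathstart (botm +++ leg2)}"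
      proof
        assume "w \<in> path_image leg2"
        then obtain v where "0 \<le> v" "v \<le> 1" "Re (loc w) = (1 - v) * Re (loc (p0 - Hv)) + v * Re (loc p0)"
          by (auto simp: leg2_def elim!: seg_loc)
        then have "Re (loc w) = Xp" using lq lH by (simp add: algebra_simps)
        then show ?thesis using rw Xne by simp
      next
        assume "w \<in> path_image botm"
        then obtain v where v: "0 \<le> v" "v \<le> 1" "Re (loc w) = (1 - v) * Re (loc (q0 - Hv)) + v * Re (loc (p0 - Hv))"
          "w = (1 - v) *\<^sub>R (q0 - Hv) + v *\<^sub>R (p0 - Hv)"
          by (auto simp: botm_def elim!: seg_loc)
        have "v * (Xp - Xq) = 0" using v(3) rw lq lH by (simp add: algebra_simps) (metis eq_commute)
        then have "v = 0" using Xne by simp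
        then show ?thesis using v by (simp add: botm_def)
      qed
    qed
  qed
qed

lemma R_ends: "pathstart Rp = q0" "pathfinish Rp = p0"
  by (simp_all add: Rp_def leg1_def leg2_def)

lemma P_simple: "simple_path Pp" and P_closed: "pathfinish Pp = pathstart Pp"
proof -
  show "simple_path Pp" unfolding Pp_def
  proof (rule simple_path_join_loop[OF A_arc R_arc])
    show "pathfinish Aarc = pathstart Rp" "pathfinish Rp = pathstart Aarc" by (simp_all add: A_ends R_ends)
    show "path_image Aarc \<inter> path_image Rp \<subseteq> {pathstart Aarc, pathstart Rp}"
    proof
      fix w assume w: "w \<in> path_image Aarc \<inter> path_image Rp"
      then obtain u where u: "u \<in> {t - \<eta>..t + \<eta>}" "w = \<gamma> u" using A_img by auto
      have lw: "Re (loc w) = Xf t u" "Im (loc w) = Yf t u" using u by (simp_all add: loc_gamma)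
      have "\<bar>Yf t u\<bar> \<le> \<eta> / 2" using Xu u by auto
      then have "Re (loc w) = Xq \<or> Re (loc w) = Xp" using R_img[of w] w lw eta by auto
      then show "w \<in> {pathstart Aarc, pathstart Rp}"
      proof
        assume "Re (loc w) = Xq"
        then have "u = t + \<eta>" using Xinj[of u "t + \<eta>"] u lw eta by (auto simp: Xq_def)
        then show ?thesis using u by (simp add: R_ends q0_def)
      next
        assume "Re (loc w) = Xp"
        then have "u = t - \<eta>" using Xinj[of u "t - \<eta>"] u lw eta by (auto simp: Xp_def)
        then show ?thesis using u by (simp add: A_ends p0_def)
      qed
    qed
  qed
  show "pathfinish Pp = pathstart Pp" by (simp add: Pp_def A_ends R_ends)
qed

definition "zd = \<gamma> t - of_real (2 * \<eta>) * normal \<gamma> t"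

lemma loc_zd: "loc zd = - \<i> * of_real (2 * \<eta>)"
  using w0_unit(1) by (simp add: zd_def loc_def normal_def algebra_simps)

lemma imrot: "Im (a * cnj b) = Im ((w0 * a) * cnj (w0 * b))"
proof -
  have "w0 * cnj w0 = 1" using w0_unit(2) complex_norm_square[of w0] by simp
  moreover have "(w0 * a) * cnj (w0 * b) = (w0 * cnj w0) * (a * cnj b)" by (simp add: ac_simps)
  ultimately have "(w0 * a) * cnj (w0 * b) = a * cnj b" by (metis mult_1)
  then show ?thesis by metis
qed

lemma imz: "Im (a * cnj (w - zd)) = Im (w0 * a) * Re (loc w) - Re (w0 * a) * (Im (loc w) + 2 * \<eta>)"
proof -
  have "w0 * (w - zd) = loc w - loc zd" by (simp add: loc_def algebra_simps)
  then show ?thesis using imrot[of a "w - zd"] loc_zd by (simp add: algebra_simps)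
qed

lemma zd_notin: "zd \<notin> path_image Aarc" "zd \<notin> path_image leg1" "zd \<notin> path_image botm" "zd \<notin> path_image leg2"
proof -
  have "Re (loc zd) = 0" "Im (loc zd) = - 2 * \<eta>" using loc_zd by simp_all
  note lz = this
  show "zd \<notin> path_image Aarc"
  proof
    assume "zd \<in> path_image Aarc"
    then obtain u where u: "u \<in> {t - \<eta>..t + \<eta>}" "zd = \<gamma> u" using A_img by auto
    then have "Yf t u = - 2 * \<eta>" using lz loc_gamma by metis
    then show False using Xu(4)[of u] u eta by auto
  qed
  have XX: "Xq \<noteq> 0" "Xp \<noteq> 0" using XpXq eta by linarith+
  have "zd \<notin> path_image Rp" using R_img[of zd] lz XX eta by auto
  then show "zd \<notin> path_image leg1" "zd \<notin> path_image botm" "zd \<notin> path_image leg2"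
    by (auto simp: Rp_def path_image_join leg1_def botm_def leg2_def)
qed

lemma P_wn_neg: "Re (winding_number Pp zd) < 0" "zd \<notin> path_image Pp"
proof -
  define e where "e = \<eta> * \<eta> / 2"
  have e: "0 < e" using eta by (simp add: e_def)
  have XB: "\<bar>Xq\<bar> \<le> \<eta>" "\<bar>Xp\<bar> \<le> \<eta>" using Xu[of "t + \<eta>"] Xu[of "t - \<eta>"] eta by (auto simp: Xq_def Xp_def)
  have wA: "Re (winding_number Aarc zd) < 0"
  proof (rule wn_neg[OF A_valid zd_notin(1) e A_deriv])
    fix x :: real assume x: "0 < x" "x < 1"
    define u where "u = t - \<eta> + 2 * \<eta> * x"
    have "0 \<le> \<eta> * x" "\<eta> * x \<le> \<eta>" using x eta by (auto intro: mult_left_le_one_le)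
    then have ur: "t - \<eta> \<le> u" "u \<le> t + \<eta>" "\<bar>u - t\<bar> \<le> \<eta>" by (auto simp: u_def)
    define al where "al = Re (w0 * tangent \<gamma> u)"
    define be where "be = Im (w0 * tangent \<gamma> u)"
    have ab: "1/2 \<le> al" "\<bar>be\<bar> \<le> 1/2" using bnd[OF ur(3)] by (auto simp: al_def be_def w0_def)
    have XY: "\<bar>Xf t u\<bar> \<le> \<eta>" "\<bar>Yf t u\<bar> \<le> \<eta> / 2" using Xu ur by auto
    have "Im (((2 * \<eta>) *\<^sub>R tangent \<gamma> u) * cnj (Aarc x - zd)) = 2 * \<eta> * (be * Xf t u - al * (Yf t u + 2 * \<eta>))"
    proof -
      have Ax: "Aarc x = \<gamma> u" by (simp add: Aarc_def u_def)
      show ?thesis unfolding imz Ax by (simp add: loc_gamma al_def be_def scaleR_conv_of_real algebra_simps)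
    qed
    moreover have "be * Xf t u \<le> \<eta> / 2"
    proof -
      have "be * Xf t u \<le> \<bar>be\<bar> * \<bar>Xf t u\<bar>" by (simp add: abs_mult[symmetric])
      also have "\<dots> \<le> 1/2 * \<eta>" using ab XY by (intro mult_mono) auto
      finally show ?thesis by simp
    qed
    moreover have "1/2 * (3 / 2 * \<eta>) \<le> al * (Yf t u + 2 * \<eta>)"
      using ab XY eta by (intro mult_mono) auto
    ultimately have "be * Xf t u - al * (Yf t u + 2 * \<eta>) \<le> - \<eta> / 4"
      and eqI: "Im (((2 * \<eta>) *\<^sub>R tangent \<gamma> u) * cnj (Aarc x - zd)) = 2 * \<eta> * (be * Xf t u - al * (Yf t u + 2 * \<eta>))"
      by linarith+
    then have "2 * \<eta> * (be * Xf t u - al * (Yf t u + 2 * \<eta>)) \<le> 2 * \<eta> * (- \<eta> / 4)"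
      using eta by (intro mult_left_mono) auto
    then have "Im (((2 * \<eta>) *\<^sub>R tangent \<gamma> u) * cnj (Aarc x - zd)) \<le> 2 * \<eta> * (- \<eta> / 4)"
      using eqI by metis
    then show "Im (((2 * \<eta>) *\<^sub>R tangent \<gamma> (t - \<eta> + 2 * \<eta> * x)) * cnj (Aarc x - zd)) \<le> - e"
      by (simp add: u_def e_def)
  qed
  have w1: "Re (winding_number leg1 zd) < 0"
  proof (rule wn_neg[OF _ zd_notin(2) e])
    show "valid_path leg1" by (simp add: leg1_def)
    show "\<And>x. (leg1 has_vector_derivative ((q0 - Hv) - q0)) (at x)"
      unfolding leg1_def by (rule has_vector_derivative_linepath_within)
    fix x :: real assume x: "0 < x" "x < 1"
    have "leg1 x \<in> closed_segment q0 (q0 - Hv)" using x by (auto simp: leg1_def linepath_in_path)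
    then obtain u where "0 \<le> u" "u \<le> 1" "Re (loc (leg1 x)) = (1 - u) * Re (loc q0) + u * Re (loc (q0 - Hv))"
      by (rule seg_loc)
    then have "Re (loc (leg1 x)) = Xq" using lq lH by (simp add: algebra_simps)
    moreover have "w0 * ((q0 - Hv) - q0) = - \<i> * of_real (4 * \<eta>)" using w0_unit(1) by (simp add: Hv_def normal_def algebra_simps)
    ultimately have "Im (((q0 - Hv) - q0) * cnj (leg1 x - zd)) = - 4 * \<eta> * Xq" unfolding imz by simp
    also have "\<dots> \<le> - 4 * \<eta> * (\<eta> / 2)" using XpXq eta by (intro mult_left_mono_neg) auto
    finally show "Im (((q0 - Hv) - q0) * cnj (leg1 x - zd)) \<le> - e" using mult_pos_pos[OF eta(1) eta(1)] unfolding e_def by linarith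
  qed
  have w3: "Re (winding_number leg2 zd) < 0"
  proof (rule wn_neg[OF _ zd_notin(4) e])
    show "valid_path leg2" by (simp add: leg2_def)
    show "\<And>x. (leg2 has_vector_derivative (p0 - (p0 - Hv))) (at x)"
      unfolding leg2_def by (rule has_vector_derivative_linepath_within)
    fix x :: real assume x: "0 < x" "x < 1"
    have "leg2 x \<in> closed_segment (p0 - Hv) p0" using x by (auto simp: leg2_def linepath_in_path)
    then obtain u where "0 \<le> u" "u \<le> 1" "Re (loc (leg2 x)) = (1 - u) * Re (loc (p0 - Hv)) + u * Re (loc p0)"
      by (rule seg_loc)
    then have "Re (loc (leg2 x)) = Xp" using lq lH by (simp add: algebra_simps)
    moreover have "w0 * (p0 - (p0 - Hv)) = \<i> * of_real (4 * \<eta>)" using w0_unit(1) by (simp add: Hv_def normal_def algebra_simps)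
    ultimately have "Im ((p0 - (p0 - Hv)) * cnj (leg2 x - zd)) = 4 * \<eta> * Xp" unfolding imz by simp
    also have "\<dots> \<le> 4 * \<eta> * (- \<eta> / 2)" using XpXq eta by (intro mult_left_mono) auto
    finally show "Im ((p0 - (p0 - Hv)) * cnj (leg2 x - zd)) \<le> - e" using mult_pos_pos[OF eta(1) eta(1)] unfolding e_def by linarith
  qed
  have w2: "Re (winding_number botm zd) < 0"
  proof (rule wn_neg[OF _ zd_notin(3) e])
    show "valid_path botm" by (simp add: botm_def)
    show "\<And>x. (botm has_vector_derivative ((p0 - Hv) - (q0 - Hv))) (at x)"
      unfolding botm_def by (rule has_vector_derivative_linepath_within)
    fix x :: real assume x: "0 < x" "x < 1"
    have "botm x \<in> closed_segment (q0 - Hv) (p0 - Hv)" using x by (auto simp: botm_def linepath_in_path)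
    then have bx: "Xp \<le> Re (loc (botm x)) \<and> Re (loc (botm x)) \<le> Xq \<and> Im (loc (botm x)) \<le> \<eta> / 2 - 4 * \<eta>"
      by (rule bot_img)
    have dd: "w0 * ((p0 - Hv) - (q0 - Hv)) = loc p0 - loc q0" by (simp add: loc_def algebra_simps)
    define ReZ where "ReZ = Re (loc (botm x))"
    define ImZ where "ImZ = Im (loc (botm x)) + 2 * \<eta>"
    have "Im (((p0 - Hv) - (q0 - Hv)) * cnj (botm x - zd)) = (Yp - Yq) * ReZ - (Xp - Xq) * ImZ"
      unfolding imz dd using lq by (simp add: ReZ_def ImZ_def)
    moreover have "(Yp - Yq) * ReZ \<le> \<eta> * \<eta>"
    proof -
      have "(Yp - Yq) * ReZ \<le> \<bar>Yp - Yq\<bar> * \<bar>ReZ\<bar>" by (simp add: abs_mult[symmetric])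
      also have "\<dots> \<le> \<eta> * \<eta>" using XpXq XB bx by (intro mult_mono) (auto simp: ReZ_def)
      finally show ?thesis .
    qed
    moreover have "\<eta> * (3/2 * \<eta>) \<le> (Xq - Xp) * (- ImZ)"
      using XpXq bx eta by (intro mult_mono) (auto simp: ImZ_def)
    ultimately show "Im (((p0 - Hv) - (q0 - Hv)) * cnj (botm x - zd)) \<le> - e"
      by (simp add: e_def algebra_simps)
  qed
  show zP: "zd \<notin> path_image Pp"
    using zd_notin by (simp add: Pp_def Rp_def path_image_join A_ends R_ends leg1_def botm_def leg2_def)
  have "winding_number Pp zd = winding_number Aarc zd + (winding_number leg1 zd + (winding_number botm zd + winding_number leg2 zd))"
    unfolding Pp_def Rp_def
    using zd_notin A_ends R_ends
    by (simp add: winding_number_join path_image_join A_path leg1_def botm_def leg2_def Rp_def)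
  then show "Re (winding_number Pp zd) < 0" using wA w1 w2 w3 by simp
qed

lemma P_path: "path Pp" using P_simple simple_path_imp_path by blast

lemma P_wn_le:
  assumes y: "y \<notin> path_image Pp"
  shows "Re (winding_number Pp y) \<le> 0"
proof -
  note JP = Jordan_inside_outside[OF P_simple P_closed]
  show ?thesis
  proof (cases "y \<in> outside (path_image Pp)")
    case True
    then show ?thesis using winding_number_zero_in_outside[OF P_path P_closed] by simp
  next
    case False
    then have yi: "y \<in> inside (path_image Pp)" using JP y by blast
    have "zd \<notin> outside (path_image Pp)"
      using P_wn_neg(1) winding_number_zero_in_outside[OF P_path P_closed] by force
    then have zi: "zd \<in> inside (path_image Pp)" using JP P_wn_neg(2) by blast
    have "winding_number Pp constant_on inside (path_image Pp)"
      by (rule winding_number_constant[OF P_path P_closed]) (use JP inside_no_overlap in auto)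
    then have "winding_number Pp y = winding_number Pp zd"
      using yi zi unfolding constant_on_def by metis
    then show ?thesis using P_wn_neg(1) by simp
  qed
qed

lemma loc_ray: "loc (\<gamma> t + of_real s * normal \<gamma> t) = \<i> * of_real s"
  using w0_unit(1) by (simp add: loc_def normal_def algebra_simps)

lemma ray_notin:
  assumes s: "0 < s"
  shows "\<gamma> t + of_real s * normal \<gamma> t \<notin> path_image Pp"
proof
  let ?r = "\<gamma> t + of_real s * normal \<gamma> t"
  have lr: "Re (loc ?r) = 0" "Im (loc ?r) = s" using loc_ray by simp_all
  assume "?r \<in> path_image Pp"
  then have "?r \<in> path_image Aarc \<or> ?r \<in> path_image Rp"
    by (simp add: Pp_def path_image_join A_ends R_ends)
  then show False
  proof
    assume "?r \<in> path_image Aarc"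
    then obtain u where u: "u \<in> {t - \<eta>..t + \<eta>}" "?r = \<gamma> u" using A_img by auto
    then have "Xf t u = 0" "Yf t u = s" using lr loc_gamma by metis+
    then have "u = t" using Xinj[of u t] u eta XY0 by auto
    then show False using \<open>Yf t u = s\<close> XY0 s by simp
  next
    assume "?r \<in> path_image Rp"
    then show False using R_img[of ?r] lr XpXq eta s by auto
  qed
qed

lemma ray_out:
  assumes e: "0 < e"
  shows "\<gamma> t + of_real e * normal \<gamma> t \<in> outside (path_image Pp)"
proof -
  let ?f = "\<lambda>s. \<gamma> t + of_real s * normal \<gamma> t"
  let ?Ray = "?f ` {e..}"
  have conn: "connected ?Ray"
    by (intro connected_continuous_image continuous_intros) auto
  have sub: "?Ray \<subseteq> - path_image Pp" using ray_notin e by auto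
  have "?Ray \<subseteq> connected_component_set (- path_image Pp) (?f e)"
    by (rule connected_component_maximal[OF _ conn sub]) auto
  moreover have "\<not> bounded ?Ray"
  proof
    assume "bounded ?Ray"
    then obtain B where B: "\<And>x. x \<in> ?Ray \<Longrightarrow> norm x \<le> B" by (auto simp: bounded_iff)
    define s where "s = \<bar>B\<bar> + norm (\<gamma> t) + e + 1"
    have "?f s \<in> ?Ray" by (rule imageI) (auto simp: s_def)
    then have "norm (?f s) \<le> B" by (rule B)
    moreover have "norm (of_real s * normal \<gamma> t) = \<bar>s\<bar>"
      by (simp add: normal_def norm_mult)
    then have "s - norm (\<gamma> t) \<le> norm (?f s)"
      using norm_triangle_ineq2[of "of_real s * normal \<gamma> t" "- \<gamma> t"] by (simp add: s_def algebra_simps)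
    ultimately show False by (simp add: s_def) (use e abs_ge_self[of B] in linarith)
  qed
  ultimately have "\<not> bounded (connected_component_set (- path_image Pp) (?f e))"
    using bounded_subset by blast
  then show ?thesis unfolding outside_def using ray_notin e by auto
qed

lemma alpha: "2 * \<eta> / L \<in> {0..1}" using eta L_pos by auto

lemma B_facts: "path Bp" "pathstart Bp = q0" "pathfinish Bp = p0"
  "path_image Bp = \<gamma> ` {t + \<eta>..t - \<eta> + L}"
proof -
  show "path Bp" unfolding Bp_def using hloop_facts(1) alpha by simp
  show "pathstart Bp = q0" using L_pos by (simp add: Bp_def hloop_def q0_def) (simp add: add.commute)
  show "pathfinish Bp = p0" using periodic by (simp add: Bp_def hloop_def p0_def)
  have "path_image Bp = hloop (t - \<eta>) ` {2 * \<eta> / L..1}"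
    unfolding Bp_def using alpha by (simp add: path_image_subpath)
  also have "\<dots> = \<gamma> ` ((\<lambda>x. t - \<eta> + L * x) ` {2 * \<eta> / L..1})"
    by (simp add: hloop_def image_image)
  also have "(\<lambda>x. t - \<eta> + L * x) ` {2 * \<eta> / L..1} = {t + \<eta>..t - \<eta> + L}"
  proof
    show "{t + \<eta>..t - \<eta> + L} \<subseteq> (\<lambda>x. t - \<eta> + L * x) ` {2 * \<eta> / L..1}"
    proof
      fix u assume u: "u \<in> {t + \<eta>..t - \<eta> + L}"
      show "u \<in> (\<lambda>x. t - \<eta> + L * x) ` {2 * \<eta> / L..1}"
        using u L_pos by (intro image_eqI[of _ _ "(u - t + \<eta>) / L"]) (auto simp: field_simps)
    qed
    show "(\<lambda>x. t - \<eta> + L * x) ` {2 * \<eta> / L..1} \<subseteq> {t + \<eta>..t - \<eta> + L}"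
    proof
      fix y assume "y \<in> (\<lambda>x. t - \<eta> + L * x) ` {2 * \<eta> / L..1}"
      then obtain x where x: "2 * \<eta> / L \<le> x" "x \<le> 1" "y = t - \<eta> + L * x" by auto
      have "2 * \<eta> \<le> L * x" using x(1) L_pos by (simp add: field_simps)
      moreover have "L * x \<le> L" using x(2) L_pos by simp
      ultimately show "y \<in> {t + \<eta>..t - \<eta> + L}" using x(3) by auto
    qed
  qed
  finally show "path_image Bp = \<gamma> ` {t + \<eta>..t - \<eta> + L}" .
qed

lemma gt_notin_B: "\<gamma> t \<notin> path_image Bp"
proof
  assume "\<gamma> t \<in> path_image Bp"
  then obtain u where u: "u \<in> {t + \<eta>..t - \<eta> + L}" "\<gamma> t = \<gamma> u" using B_facts(4) by auto
  then obtain k :: int where k: "u = t + of_int k * L" using eq_mod by blast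
  have "\<eta> \<le> of_int k * L" "of_int k * L \<le> L - \<eta>" using u(1) k by auto
  then have "0 < of_int k * L" "of_int k * L < L" using eta by linarith+
  then have "(0::real) < of_int k" "(of_int k - 1) * L < 0" using L_pos
    by (simp_all add: zero_less_mult_iff algebra_simps)
  then have "0 < k" "k < 1" using L_pos by (simp_all add: mult_less_0_iff)
  then show False by linarith
qed

lemma gt_notin_R: "\<gamma> t \<notin> path_image Rp"
proof
  assume "\<gamma> t \<in> path_image Rp"
  then show False using R_img[of "\<gamma> t"] loc_gt XpXq eta by auto
qed

lemma hloop_split: "path_image (hloop (t - \<eta>)) = path_image Aarc \<union> path_image Bp"
proof -
  have "path_image (hloop (t - \<eta>)) = hloop (t - \<eta>) ` ({0..2 * \<eta> / L} \<union> {2 * \<eta> / L..1})"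
    unfolding path_image_def using alpha by (simp add: ivl_disj_un_two_touch(4))
  then show ?thesis unfolding A_sub Bp_def using alpha by (simp add: path_image_subpath image_Un)
qed

lemma side_main: "\<exists>\<delta>>0. \<forall>e. 0 < e \<and> e < \<delta> \<longrightarrow> \<gamma> t + of_real e * normal \<gamma> t \<in> \<Omega>"
proof -
  have Qp: "path Qp" "pathfinish Qp = pathstart Qp" "path_image Qp = path_image Rp \<union> path_image Bp"
    using B_facts R_arc arc_imp_path
    by (auto simp: Qp_def path_image_join R_ends)
  have "\<gamma> t \<notin> path_image Qp" using Qp(3) gt_notin_B gt_notin_R by auto
  then obtain d where d: "d > 0" "ball (\<gamma> t) d \<inter> path_image Qp = {}"
    using not_on_path_ball[OF Qp(1)] by blast
  have "winding_number Qp constant_on ball (\<gamma> t) d"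
    by (rule winding_number_constant[OF Qp(1,2)]) (use d in auto)
  then obtain k where k: "\<And>y. y \<in> ball (\<gamma> t) d \<Longrightarrow> winding_number Qp y = k"
    unfolding constant_on_def by blast
  have R_path: "path Rp" using R_arc arc_imp_path by blast
  have decomp: "winding_number loop y = winding_number Pp y + k"
    if y: "y \<in> ball (\<gamma> t) d" "y \<notin> path_image loop" for y
  proof -
    have yA: "y \<notin> path_image Aarc" "y \<notin> path_image Bp" "y \<notin> path_image (hloop (t - \<eta>))"
      using y hloop_split hloop_facts(3) by auto
    have yR: "y \<notin> path_image Rp" using y d Qp(3) by auto
    have "winding_number loop y = winding_number (hloop (t - \<eta>)) y"
      using hloop_facts(4) y by simp
    also have "\<dots> = winding_number Aarc y + winding_number Bp y"
      using winding_number_subpath_combine[OF hloop_facts(1) yA(3), of 0 "2 * \<eta> / L" 1] alpha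
      unfolding A_sub Bp_def by simp
    also have "winding_number Pp y = winding_number Aarc y + winding_number Rp y"
      unfolding Pp_def by (rule winding_number_join[OF A_path yA(1) R_path yR]) (simp add: A_ends R_ends)
    moreover have "winding_number Qp y = - winding_number Rp y + winding_number Bp y"
      unfolding Qp_def using winding_number_join[of "reversepath Rp" y Bp] winding_number_reversepath[OF R_path yR]
        R_path yR yA(2) B_facts by (simp add: R_ends)
    moreover have "winding_number Qp y = k" using k y by simp
    ultimately show ?thesis by simp
  qed
  have "\<gamma> t \<in> closure \<Omega>" using front gamma_in_image[of t] frontier_def by (metis DiffD1)
  then obtain y2 where y2: "y2 \<in> \<Omega>" "dist y2 (\<gamma> t) < d" using d closure_approachable by metis
  have y2b: "y2 \<in> ball (\<gamma> t) d" using y2 by (simp add: dist_commute)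
  have y2n: "y2 \<notin> path_image loop" using y2 O_disj by blast
  have y2P: "y2 \<notin> path_image Pp"
    using y2n y2b d Qp(3) hloop_split hloop_facts(3)
    by (auto simp: Pp_def path_image_join A_ends R_ends)
  have "1 = winding_number Pp y2 + k" using decomp[OF y2b y2n] ccw'[OF y2(1)] by simp
  then have Rek: "1 \<le> Re k" using P_wn_le[OF y2P] by (metis le_diff_eq one_complex.sel(1) minus_complex.sel(1) add_diff_cancel_left' diff_ge_0_iff_ge plus_complex.sel(1) add.commute)
  show ?thesis
  proof (intro exI[of _ d] conjI allI impI d(1))
    fix e assume e: "0 < e \<and> e < d"
    let ?z = "\<gamma> t + of_real e * normal \<gamma> t"
    have zb: "?z \<in> ball (\<gamma> t) d" using e by (simp add: dist_norm normal_def norm_mult)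
    have zP: "?z \<notin> path_image Pp" using ray_notin e by blast
    have zn: "?z \<notin> path_image loop"
      using zP zb d Qp(3) hloop_split hloop_facts(3)
      by (auto simp: Pp_def path_image_join A_ends R_ends)
    have "winding_number Pp ?z = 0"
      using winding_number_zero_in_outside[OF P_path P_closed ray_out] e by blast
    then have "winding_number loop ?z = k" using decomp[OF zb zn] by simp
    then have "winding_number loop ?z \<noteq> 0" using Rek by auto
    then have "?z \<notin> outside (path_image loop)"
      using winding_number_zero_in_outside[OF loop_path loop_closed] by blast
    then show "?z \<in> \<Omega>" using J zn O_inside by blast
  qed
qed

end


context dom begin

lemma side: "\<exists>\<delta>>0. \<forall>e. 0 < e \<and> e < \<delta> \<longrightarrow> \<gamma> t + of_real e * normal \<gamma> t \<in> \<Omega>"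
proof -
  obtain \<eta> where e: "0 < \<eta>" "4 * \<eta> < L"
    "\<And>u1 u2. t - \<eta> \<le> u1 \<Longrightarrow> u1 \<le> u2 \<Longrightarrow> u2 \<le> t + \<eta> \<Longrightarrow>
        (u2 - u1) / 2 \<le> Xf t u2 - Xf t u1 \<and> Xf t u2 - Xf t u1 \<le> u2 - u1 \<and> \<bar>Yf t u2 - Yf t u1\<bar> \<le> (u2 - u1) / 2"
    "\<And>u. \<bar>u - t\<bar> \<le> \<eta> \<Longrightarrow> 1/2 \<le> Re (cnj (tangent \<gamma> t) * tangent \<gamma> u) \<and> \<bar>Im (cnj (tangent \<gamma> t) * tangent \<gamma> u)\<bar> \<le> 1/2"
    by (rule local_frame[of t]) blast
  interpret sloc \<gamma> L \<Omega> t \<eta>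
    by unfold_locales (use e in auto)
  show ?thesis by (rule side_main)
qed

end

lemma vec_bound:
  fixes f :: "real \<Rightarrow> 'a::real_normed_vector"
  assumes ab: "a \<le> b" and d: "\<And>x. x \<in> {a..b} \<Longrightarrow> (f has_vector_derivative f' x) (at x)"
    and B: "\<And>x. x \<in> {a..b} \<Longrightarrow> norm (f' x) \<le> B"
  shows "norm (f b - f a) \<le> B * (b - a)"
proof -
  have "norm (f b - f a) \<le> B * norm (b - a)"
  proof (rule differentiable_bound[of "{a..b}" f "\<lambda>x h. h *\<^sub>R f' x"])
    show "convex {a..b}" by simp
    show "\<And>x. x \<in> {a..b} \<Longrightarrow> (f has_derivative (\<lambda>h. h *\<^sub>R f' x)) (at x within {a..b})"
      using d unfolding has_vector_derivative_def by (blast intro: has_derivative_at_withinI)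
    show "\<And>x. x \<in> {a..b} \<Longrightarrow> onorm (\<lambda>h. h *\<^sub>R f' x) \<le> B"
      using B by (simp add: onorm_scaleR_left[OF bounded_linear_ident] onorm_id)
  qed (use ab in auto)
  then show ?thesis using ab by simp
qed


lemma sgn_bound:
  fixes x T :: complex
  assumes "norm T = 1"
  shows "norm (sgn x - T) \<le> 2 * norm (x - T)"
proof -
  have "norm (sgn x - x) \<le> norm (x - T)"
  proof (cases "x = 0")
    case True then show ?thesis using assms by simp
  next
    case False
    have sx: "sgn x * of_real (norm x) = x"
      using False by (simp add: sgn_div_norm scaleR_conv_of_real)
    have "sgn x - x = sgn x * of_real (1 - norm x)"
      using sx by (simp add: algebra_simps)
    then have "norm (sgn x - x) = norm (sgn x) * norm (of_real (1 - norm x) :: complex)" by (simp only: norm_mult)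
    then have "norm (sgn x - x) = \<bar>1 - norm x\<bar>" using False by (simp only: norm_sgn norm_of_real) simp
    also have "\<dots> \<le> norm (x - T)" using assms norm_triangle_ineq3[of x T]
      by (simp add: abs_minus_commute)
    finally show ?thesis .
  qed
  moreover have "norm (sgn x - T) \<le> norm (sgn x - x) + norm (x - T)"
    using norm_triangle_ineq[of "sgn x - x" "x - T"] by simp
  ultimately show ?thesis by simp
qed

lemma sqrt_bound: "0 \<le> y \<Longrightarrow> y \<le> 1 \<Longrightarrow> 1 - sqrt (1 - y) \<le> y"
proof -
  assume y: "0 \<le> y" "y \<le> 1"
  have "1 - y \<le> sqrt (1 - y)"
  proof -
    have "(1 - y) * (1 - y) \<le> 1 - y" using y by (intro mult_left_le) auto
    then show ?thesis using y by (metis real_le_rsqrt power2_eq_square)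
  qed
  then show ?thesis by simp
qed

locale main = dom +
  fixes r :: real and a :: "nat \<Rightarrow> nat \<Rightarrow> complex \<Rightarrow> real" and N :: nat and F :: "complex \<Rightarrow> real"
  assumes r_pos: "0 < r"
    and integral: "poly_integral \<gamma> \<Omega> r a N"
    and F_cont: "continuous_on (Omega_r_closed \<gamma> r) F"
    and F_def: "\<forall>x v. x \<in> \<Omega> \<and> norm v = 1 \<and> \<not> sphere (x + \<i> * of_real r * v) r \<subseteq> \<Omega> \<longrightarrow>
                  F (x + \<i> * of_real r * v) = poly_mom a N x v"
begin

definition "Iset = {(k, l). k + l \<le> N}"

lemma Ifin: "finite Iset"
proof -
  have "Iset \<subseteq> {..N} \<times> {..N}" by (auto simp: Iset_def)
  then show ?thesis by (rule finite_subset) simp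
qed

lemma integral_parts:
  shows "\<forall>k l. k + l \<le> N \<longrightarrow> smooth_on_closed (Omega_plus \<gamma> r) (a k l)"
    and "\<forall>t v s. norm v = 1 \<and> Re (cnj (normal \<gamma> t) * v) > 0 \<and> 0 \<le> s \<and>
        (\<forall>s'\<in>{0<..<s}. larmor_pos r (\<gamma> t) v s' \<in> \<Omega>) \<longrightarrow>
        poly_mom a N (larmor_pos r (\<gamma> t) v s) (larmor_vel r v s) = poly_mom a N (\<gamma> t) v"
    and "\<forall>t v. norm v = 1 \<longrightarrow>
        poly_mom a N (\<gamma> t) v = poly_mom a N (\<gamma> t) (reflect (normal \<gamma> t) v)"
  using integral unfolding poly_integral_def by blast+

lemma a_smooth: "(k, l) \<in> Iset \<Longrightarrow> smooth_on_closed (Omega_plus \<gamma> r) (a k l)"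
  using integral_parts(1) unfolding Iset_def by blast

lemma gchoice: obtains gf :: "nat \<Rightarrow> nat \<Rightarrow> complex \<Rightarrow> real" and D1 D2 :: "nat \<Rightarrow> nat \<Rightarrow> complex \<Rightarrow> real"
  where "\<And>k l z. (k, l) \<in> Iset \<Longrightarrow> z \<in> Omega_plus \<gamma> r \<Longrightarrow> gf k l z = a k l z"
    "\<And>k l z. (k, l) \<in> Iset \<Longrightarrow> z \<in> Omega_plus \<gamma> r \<Longrightarrow>
        (gf k l has_derivative (\<lambda>h. Re h * D1 k l z + Im h * D2 k l z)) (at z)"
proof -
  have "\<forall>kl. \<exists>G. kl \<in> Iset \<longrightarrow> (\<forall>z \<in> Omega_plus \<gamma> r. fst G z = a (fst kl) (snd kl) z \<and>
      (fst G has_derivative (\<lambda>h. Re h * fst (snd G) z + Im h * snd (snd G) z)) (at z))"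
  proof (intro allI)
    fix kl :: "nat \<times> nat"
    obtain k l where kl: "kl = (k, l)" by fastforce
    show "\<exists>G. kl \<in> Iset \<longrightarrow> (\<forall>z \<in> Omega_plus \<gamma> r. fst G z = a (fst kl) (snd kl) z \<and>
      (fst G has_derivative (\<lambda>h. Re h * fst (snd G) z + Im h * snd (snd G) z)) (at z))"
    proof (cases "(k, l) \<in> Iset")
      case True
      then have "smooth_on_closed (Omega_plus \<gamma> r) (a k l)" by (rule a_smooth)
      then obtain U g where U: "open U" "Omega_plus \<gamma> r \<subseteq> U" "smooth_on U g" "\<forall>z\<in>Omega_plus \<gamma> r. g z = a k l z"
        unfolding smooth_on_closed_def by (elim exE conjE) (intro that)
      from U(3) obtain S where gS: "g \<in> S" and S: "\<forall>g\<in>S. \<exists>g1\<in>S. \<exists>g2\<in>S. \<forall>z\<in>U.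
          (g has_derivative (\<lambda>h. Re h * g1 z + Im h * g2 z)) (at z)"
        unfolding smooth_on_def by (elim exE conjE)
      from S gS obtain g1 g2 where g12: "\<forall>z\<in>U. (g has_derivative (\<lambda>h. Re h * g1 z + Im h * g2 z)) (at z)"
        by (meson bspec)
      show ?thesis
      proof (intro exI[of _ "(g, g1, g2)"] impI ballI conjI)
        fix z assume z: "z \<in> Omega_plus \<gamma> r"
        show "fst (g, g1, g2) z = a (fst kl) (snd kl) z" using U(4) z kl by simp
        show "(fst (g, g1, g2) has_derivative (\<lambda>h. Re h * fst (snd (g, g1, g2)) z + Im h * snd (snd (g, g1, g2)) z)) (at z)"
          using g12 U(2) z by (simp add: subset_iff)
      qed
    qed (simp add: kl)
  qed
  then obtain G where G: "\<And>kl. kl \<in> Iset \<Longrightarrow> (\<forall>z \<in> Omega_plus \<gamma> r. fst (G kl) z = a (fst kl) (snd kl) z \<and>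
      (fst (G kl) has_derivative (\<lambda>h. Re h * fst (snd (G kl)) z + Im h * snd (snd (G kl)) z)) (at z))"
    using choice[of "\<lambda>kl G. kl \<in> Iset \<longrightarrow> (\<forall>z \<in> Omega_plus \<gamma> r. fst G z = a (fst kl) (snd kl) z \<and>
      (fst G has_derivative (\<lambda>h. Re h * fst (snd G) z + Im h * snd (snd G) z)) (at z))"] by blast
  show ?thesis
    by (rule that[of "\<lambda>k l. fst (G (k, l))" "\<lambda>k l. fst (snd (G (k, l)))" "\<lambda>k l. snd (snd (G (k, l)))"])
      (use G in \<open>simp_all\<close>)
qed


lemma poly_mom_cont_v:
  assumes "(f \<longlongrightarrow> l) FF"
  shows "((\<lambda>\<theta>. poly_mom a N x (f \<theta>)) \<longlongrightarrow> poly_mom a N x l) FF"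
  unfolding poly_mom_def case_prod_beta
  by (intro tendsto_sum tendsto_mult tendsto_const tendsto_power tendsto_Re tendsto_Im assms)

end

locale main2 = main +
  fixes gf D1 D2 :: "nat \<Rightarrow> nat \<Rightarrow> complex \<Rightarrow> real"
  assumes gf_eq: "\<And>k l z. (k, l) \<in> Iset \<Longrightarrow> z \<in> Omega_plus \<gamma> r \<Longrightarrow> gf k l z = a k l z"
    and gf_der: "\<And>k l z. (k, l) \<in> Iset \<Longrightarrow> z \<in> Omega_plus \<gamma> r \<Longrightarrow>
        (gf k l has_derivative (\<lambda>h. Re h * D1 k l z + Im h * D2 k l z)) (at z)"
begin

lemma gamma_Op: "\<gamma> s \<in> Omega_plus \<gamma> r"
proof -
  have "\<gamma> s = offset \<gamma> 0 s" by (simp add: offset_def)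
  then show ?thesis unfolding Omega_plus_def using r_pos by auto
qed

lemma B_nontan:
  assumes v: "norm v = 1" and nt: "Re (cnj (normal \<gamma> t) * v) \<noteq> 0"
  shows "F (\<gamma> t + \<i> * of_real r * v) = poly_mom a N (\<gamma> t) v"
proof -
  define c where "c = \<gamma> t + \<i> * of_real r * v"
  define xe where "xe = (\<lambda>e::real. \<gamma> t + of_real e * normal \<gamma> t)"
  define ce where "ce = (\<lambda>e. xe e + \<i> * of_real r * v)"
  let ?phi = "\<lambda>u. (c - \<gamma> u) \<bullet> (c - \<gamma> u)"
  have vv: "Re v * Re v + Im v * Im v = 1" using v cmod_power2[of v] by (simp add: power2_eq_square)
  have "?phi t = r * r * (Re v * Re v + Im v * Im v)" by (simp add: c_def inner_complex_def algebra_simps)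
  then have phit: "?phi t = r * r" using vv by simp
  have l: "(c - \<gamma> t) \<bullet> tangent \<gamma> t = - r * Re (cnj (normal \<gamma> t) * v)"
    by (simp add: c_def inner_complex_def normal_def algebra_simps)
  have "\<exists>t'. ?phi t' < r * r"
  proof (cases "0 < - 2 * ((c - \<gamma> t) \<bullet> tangent \<gamma> t)")
    case True
    from DERIV_pos_inc_left[OF dist_deriv True] obtain d where "d > 0" "\<forall>h>0. h < d \<longrightarrow> ?phi (t - h) < ?phi t" by blast
    then have "?phi (t - d / 2) < ?phi t" by simp
    then show ?thesis using phit by (intro exI[of _ "t - d / 2"]) simp
  next
    case False
    have "(c - \<gamma> t) \<bullet> tangent \<gamma> t \<noteq> 0" unfolding l using nt r_pos by simp
    then have neg: "- 2 * ((c - \<gamma> t) \<bullet> tangent \<gamma> t) < 0" using False by linarith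
    from DERIV_neg_dec_right[OF dist_deriv neg] obtain d where "d > 0" "\<forall>h>0. h < d \<longrightarrow> ?phi (t + h) < ?phi t" by blast
    then have "?phi (t + d / 2) < ?phi t" by simp
    then show ?thesis using phit by (intro exI[of _ "t + d / 2"]) simp
  qed
  then obtain t' where t': "?phi t' < r * r" by blast
  have nt': "norm (c - \<gamma> t') < r"
  proof -
    have "norm (c - \<gamma> t') ^ 2 < r ^ 2" using t' by (simp add: dot_square_norm power2_eq_square)
    then show ?thesis using r_pos by (simp add: power_less_imp_less_base)
  qed
  obtain \<delta> where \<delta>: "\<delta> > 0" "\<And>e. 0 < e \<Longrightarrow> e < \<delta> \<Longrightarrow> xe e \<in> \<Omega>" using side[of t] unfolding xe_def by blast
  define \<rho> where "\<rho> = min \<delta> (min (r - norm (c - \<gamma> t')) (2 * r))"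
  have \<rho>: "\<rho> > 0" using \<delta> nt' r_pos by (simp add: \<rho>_def)
  have nn: "norm (normal \<gamma> t) = 1" by (simp add: normal_def norm_mult)
  have ev: "eventually (\<lambda>e. F (ce e) = poly_mom a N (xe e) v \<and> ce e \<in> Omega_r_closed \<gamma> r \<and>
      (\<forall>k l. (k, l) \<in> Iset \<longrightarrow> a k l (xe e) = gf k l (xe e))) (at_right 0)"
    unfolding eventually_at_right_field
  proof (intro exI[of _ \<rho>] conjI allI impI \<rho>)
    fix e :: real assume e: "0 < e" "e < \<rho>"
    have xO: "xe e \<in> \<Omega>" using \<delta>(2)[of e] e by (simp add: \<rho>_def)
    have "norm (ce e - \<gamma> t') \<le> norm (c - \<gamma> t') + norm (of_real e * normal \<gamma> t)"
    proof -
      have "ce e - \<gamma> t' = (c - \<gamma> t') + of_real e * normal \<gamma> t" by (simp add: ce_def xe_def c_def algebra_simps)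
      then show ?thesis by (metis norm_triangle_ineq)
    qed
    also have "\<dots> = norm (c - \<gamma> t') + e" using nn e by (simp add: norm_mult)
    also have "\<dots> \<le> r" using e by (simp add: \<rho>_def)
    finally have cr: "norm (ce e - \<gamma> t') \<le> r" .
    show "F (ce e) = poly_mom a N (xe e) v"
      using F_def xO v sphere_not_in[OF r_pos cr] unfolding ce_def by blast
    show "ce e \<in> Omega_r_closed \<gamma> r" by (rule near_Or[OF cr])
    fix k l assume kl: "(k, l) \<in> Iset"
    have "xe e = offset \<gamma> e t" by (simp add: xe_def offset_def)
    moreover have "e \<in> {0..2*r}" using e by (simp add: \<rho>_def)
    ultimately have "xe e \<in> Omega_plus \<gamma> r"
      unfolding Omega_plus_def by blast
    then show "a k l (xe e) = gf k l (xe e)" using gf_eq kl by simp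
  qed
  have xlim: "(xe \<longlongrightarrow> \<gamma> t) (at_right 0)"
    unfolding xe_def by (rule tendsto_eq_intros | simp)+
  have clim: "(ce \<longlongrightarrow> c) (at_right 0)"
    unfolding ce_def c_def xe_def by (rule tendsto_eq_intros | simp)+
  have cO: "c \<in> Omega_r_closed \<gamma> r" by (rule near_Or[of c t]) (simp add: c_def v norm_mult r_pos less_imp_le)
  have l1: "((\<lambda>e. F (ce e)) \<longlongrightarrow> F c) (at_right 0)"
    by (rule continuous_on_tendsto_compose[OF F_cont clim cO]) (use ev in \<open>auto elim: eventually_mono\<close>)
  have gl: "((\<lambda>e. gf k l (xe e)) \<longlongrightarrow> a k l (\<gamma> t)) (at_right 0)" if kl: "(k, l) \<in> Iset" for k l
  proof -
    have "isCont (gf k l) (\<gamma> t)" using gf_der[OF kl gamma_Op] by (rule has_derivative_continuous)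
    then have "((\<lambda>e. gf k l (xe e)) \<longlongrightarrow> gf k l (\<gamma> t)) (at_right 0)"
      using xlim by (rule isCont_tendsto_compose)
    then show ?thesis using gf_eq[OF kl gamma_Op] by simp
  qed
  have l2: "((\<lambda>e. poly_mom a N (xe e) v) \<longlongrightarrow> poly_mom a N (\<gamma> t) v) (at_right 0)"
  proof -
    have "((\<lambda>e. \<Sum>kl\<in>Iset. gf (fst kl) (snd kl) (xe e) * Re v ^ fst kl * Im v ^ snd kl) \<longlongrightarrow>
          (\<Sum>kl\<in>Iset. a (fst kl) (snd kl) (\<gamma> t) * Re v ^ fst kl * Im v ^ snd kl)) (at_right 0)"
      by (intro tendsto_sum tendsto_mult_right tendsto_mult_left gl) auto
    moreover have "eventually (\<lambda>e. (\<Sum>kl\<in>Iset. gf (fst kl) (snd kl) (xe e) * Re v ^ fst kl * Im v ^ snd kl)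
        = poly_mom a N (xe e) v) (at_right 0)"
      using ev by eventually_elim (auto simp: poly_mom_def Iset_def[symmetric] case_prod_beta intro!: sum.cong)
    ultimately show ?thesis unfolding poly_mom_def Iset_def[symmetric] case_prod_beta
      by (rule Lim_transform_eventually)
  qed
  have "((\<lambda>e. F (ce e)) \<longlongrightarrow> poly_mom a N (\<gamma> t) v) (at_right 0)"
    using l2 by (rule Lim_transform_eventually) (use ev in \<open>auto elim: eventually_mono\<close>)
  then have "F c = poly_mom a N (\<gamma> t) v" using l1 tendsto_unique[OF trivial_limit_at_right_real] by blast
  then show ?thesis by (simp add: c_def)
qed


lemma B_all:
  assumes v: "norm v = 1"
  shows "F (\<gamma> t + \<i> * of_real r * v) = poly_mom a N (\<gamma> t) v"
proof (cases "Re (cnj (normal \<gamma> t) * v) \<noteq> 0")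
  case True
  then show ?thesis using B_nontan v by blast
next
  case False
  define w where "w = cnj (normal \<gamma> t) * v"
  have nw: "norm w = 1" using v by (simp add: w_def normal_def norm_mult)
  have Rw: "Re w = 0" using False by (simp add: w_def)
  have Iw: "Im w \<noteq> 0"
  proof
    assume "Im w = 0"
    then have "w = 0" using Rw by (simp add: complex_eq_iff)
    then show False using nw by simp
  qed
  define vt where "vt = (\<lambda>\<theta>. v * cis \<theta>)"
  have ev: "eventually (\<lambda>\<theta>. F (\<gamma> t + \<i> * of_real r * vt \<theta>) = poly_mom a N (\<gamma> t) (vt \<theta>)) (at_right 0)"
    unfolding eventually_at_right_field
  proof (intro exI[of _ 1] conjI allI impI zero_less_one)
    fix \<theta> :: real assume th: "0 < \<theta>" "\<theta> < 1"
    have "sin \<theta> > 0" using th pi_gt3 by (intro sin_gt_zero) auto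
    then have "Re (cnj (normal \<gamma> t) * vt \<theta>) \<noteq> 0"
      using Iw Rw by (simp add: vt_def w_def[symmetric] mult.assoc[symmetric])
    moreover have "norm (vt \<theta>) = 1" using v by (simp add: vt_def norm_mult)
    ultimately show "F (\<gamma> t + \<i> * of_real r * vt \<theta>) = poly_mom a N (\<gamma> t) (vt \<theta>)"
      using B_nontan by blast
  qed
  have vlim: "(vt \<longlongrightarrow> v) (at_right 0)"
    unfolding vt_def by (rule tendsto_eq_intros | simp)+
  have cO: "\<gamma> t + \<i> * of_real r * u \<in> Omega_r_closed \<gamma> r" if "norm u = 1" for u
    by (rule near_Or[of _ t]) (simp add: that norm_mult r_pos less_imp_le)
  have l1: "((\<lambda>\<theta>. F (\<gamma> t + \<i> * of_real r * vt \<theta>)) \<longlongrightarrow> F (\<gamma> t + \<i> * of_real r * v)) (at_right 0)"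
  proof (rule continuous_on_tendsto_compose[OF F_cont _ cO[OF v]])
    show "((\<lambda>\<theta>. \<gamma> t + \<i> * of_real r * vt \<theta>) \<longlongrightarrow> \<gamma> t + \<i> * of_real r * v) (at_right 0)"
      by (intro tendsto_intros vlim)
    show "\<forall>\<^sub>F \<theta> in at_right 0. \<gamma> t + \<i> * of_real r * vt \<theta> \<in> Omega_r_closed \<gamma> r"
      using v by (intro always_eventually allI cO) (simp add: vt_def norm_mult)
  qed
  have l2: "((\<lambda>\<theta>. poly_mom a N (\<gamma> t) (vt \<theta>)) \<longlongrightarrow> poly_mom a N (\<gamma> t) v) (at_right 0)"
    by (rule poly_mom_cont_v[OF vlim])
  have "((\<lambda>\<theta>. F (\<gamma> t + \<i> * of_real r * vt \<theta>)) \<longlongrightarrow> poly_mom a N (\<gamma> t) v) (at_right 0)"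
    using l2 ev by (rule Lim_transform_eventually[OF _ eventually_mono]) simp
  then show ?thesis using l1 tendsto_unique[OF trivial_limit_at_right_real] by blast
qed


definition "G2 p = (\<Sum>kl\<in>Iset. gf (fst kl) (snd kl) (\<gamma> (fst p)) * Re (snd p) ^ fst kl * Im (snd p) ^ snd kl)"

lemma G2_eq: "G2 (s, v) = poly_mom a N (\<gamma> s) v"
  unfolding G2_def poly_mom_def Iset_def[symmetric] case_prod_beta
  by (intro sum.cong refl) (simp add: gf_eq gamma_Op)

lemma G2_diff: "G2 differentiable (at p)"
proof -
  have gam: "(\<lambda>p::real \<times> complex. \<gamma> (fst p)) differentiable (at p)" for p
  proof -
    have "fst differentiable (at p)" by (simp add: bounded_linear_fst bounded_linear_imp_differentiable)
    moreover have "\<gamma> differentiable (at (fst p))" using gd[of "fst p"] unfolding differentiable_def has_vector_derivative_def by blast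
    ultimately show ?thesis using differentiable_chain_at[of fst p \<gamma>] by (simp add: o_def)
  qed
  have g: "(\<lambda>p::real \<times> complex. gf k l (\<gamma> (fst p))) differentiable (at p)" if kl: "(k, l) \<in> Iset" for k l p
  proof -
    have "gf k l differentiable (at (\<gamma> (fst p)))" using gf_der[OF kl gamma_Op] by (auto simp: differentiable_def)
    then show ?thesis using differentiable_chain_at[OF gam[of p], of "gf k l"] by (simp add: o_def)
  qed
  have re: "(\<lambda>p::real \<times> complex. Re (snd p)) differentiable (at p)" for p
    by (intro bounded_linear_imp_differentiable bounded_linear_compose[OF bounded_linear_Re bounded_linear_snd])
  have im: "(\<lambda>p::real \<times> complex. Im (snd p)) differentiable (at p)" for p
    by (intro bounded_linear_imp_differentiable bounded_linear_compose[OF bounded_linear_Im bounded_linear_snd])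
  show ?thesis unfolding G2_def[abs_def]
    using Ifin g re im by (intro differentiable_sum ballI) (auto intro!: differentiable_mult differentiable_power)
qed


lemma circ:
  assumes sig: "\<sigma> = 1 \<or> \<sigma> = -1"
  obtains C \<delta>0 where "0 < \<delta>0" "0 \<le> C"
    "\<And>\<delta>. 0 < \<delta> \<Longrightarrow> \<delta> \<le> \<delta>0 \<Longrightarrow> \<exists>v1 v2. G2 (t, v1) = G2 (t + \<delta>, v2) \<and>
        norm (v1 - of_real \<sigma> * tangent \<gamma> t) \<le> C * \<delta> \<and> norm (v2 - of_real \<sigma> * tangent \<gamma> t) \<le> C * \<delta> \<and>
        norm (v2 - v1 - \<i> * of_real \<delta> * tangent \<gamma> t / of_real r) \<le> C * (\<delta> * \<delta>)"
proof -
  define T where "T = tangent \<gamma> t"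
  have nT: "norm T = 1" by (simp add: T_def)
  have ss: "\<sigma> * \<sigma> = 1" "\<bar>\<sigma>\<bar> = 1" using sig by auto
  have "compact (T2 ` {t..t+1})" by (intro compact_continuous_image continuous_on_subset[OF T2c]) auto
  then obtain B where B: "\<And>x. x \<in> T2 ` {t..t+1} \<Longrightarrow> norm x \<le> B" using compact_imp_bounded bounded_iff by metis
  define M where "M = max B 0"
  have M: "0 \<le> M" "\<And>s. s \<in> {t..t+1} \<Longrightarrow> norm (T2 s) \<le> M" using B by (auto simp: M_def intro: le_max_iff_disj[THEN iffD2])
  have Tb: "norm (tangent \<gamma> s - T) \<le> M * (s - t)" if s: "s \<in> {t..t+1}" for s
    using vec_bound[of t s "tangent \<gamma>" T2 M] td M(2) s by (auto simp: T_def)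
  have db1: "norm (\<gamma> (t + \<delta>) - \<gamma> t - of_real \<delta> * T) \<le> M * \<delta> * \<delta>" if dl: "0 < \<delta>" "\<delta> \<le> 1" for \<delta>
  proof -
    have "norm ((\<gamma> (t + \<delta>) - of_real (t + \<delta>) * T) - (\<gamma> t - of_real t * T)) \<le> (M * \<delta>) * (t + \<delta> - t)"
    proof (rule vec_bound[of t "t + \<delta>" "\<lambda>s. \<gamma> s - of_real s * T" "\<lambda>s. tangent \<gamma> s - T"])
      show "t \<le> t + \<delta>" using dl by simp
      show "\<And>x. x \<in> {t..t + \<delta>} \<Longrightarrow> ((\<lambda>s. \<gamma> s - of_real s * T) has_vector_derivative tangent \<gamma> x - T) (at x)"
      proof -
        fix x
        have l: "((\<lambda>s. s *\<^sub>R T) has_vector_derivative T) (at x)"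
          unfolding has_vector_derivative_def by (rule bounded_linear_imp_has_derivative[OF bounded_linear_scaleR_left])
        show "((\<lambda>s. \<gamma> s - of_real s * T) has_vector_derivative tangent \<gamma> x - T) (at x)"
          using has_vector_derivative_diff[OF gd[of x] l] by (simp add: scaleR_conv_of_real)
      qed
      show "\<And>x. x \<in> {t..t + \<delta>} \<Longrightarrow> norm (tangent \<gamma> x - T) \<le> M * \<delta>"
      proof -
        fix x assume x: "x \<in> {t..t + \<delta>}"
        then have "norm (tangent \<gamma> x - T) \<le> M * (x - t)" using Tb dl by auto
        also have "\<dots> \<le> M * \<delta>" using x M(1) by (intro mult_left_mono) auto
        finally show "norm (tangent \<gamma> x - T) \<le> M * \<delta>" .
      qed
    qed
    then show ?thesis by (simp add: algebra_simps)
  qed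
  have db2: "norm (\<gamma> (t + \<delta>) - \<gamma> t) \<le> \<delta>" if dl: "0 < \<delta>" for \<delta>
    using vec_bound[of t "t + \<delta>" \<gamma> "tangent \<gamma>" 1] gd dl by simp
  define \<delta>0 where "\<delta>0 = min 1 (min (1 / (2 * M + 2)) r)"
  define C where "C = 1 / (2 * r) + 1 / (4 * r * r) + 2 * M + 1 / r + M / r"
  have \<delta>0: "0 < \<delta>0" using M(1) r_pos by (simp add: \<delta>0_def)
  have C: "0 \<le> C" using M(1) r_pos by (simp add: C_def)
  show ?thesis
  proof (rule that[OF \<delta>0 C])
    fix \<delta> :: real assume dl: "0 < \<delta>" "\<delta> \<le> \<delta>0"
    have d1: "\<delta> \<le> 1" "\<delta> \<le> r" "\<delta> \<le> 1 / (2 * M + 2)" using dl by (auto simp: \<delta>0_def)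
    define d where "d = \<gamma> (t + \<delta>) - \<gamma> t"
    define nd where "nd = norm d"
    have Md: "M * \<delta> \<le> 1 / 2"
    proof -
      have "M * \<delta> \<le> M * (1 / (2 * M + 2))" using d1 M(1) by (intro mult_left_mono) auto
      also have "\<dots> \<le> 1 / 2" using M(1) by (simp add: field_simps)
      finally show ?thesis .
    qed
    have dT: "norm (d - of_real \<delta> * T) \<le> M * \<delta> * \<delta>" using db1[OF dl(1) d1(1)] by (simp add: d_def)
    have "\<delta> - nd \<le> M * \<delta> * \<delta>"
    proof -
      have "norm (of_real \<delta> * T) - norm d \<le> norm (d - of_real \<delta> * T)"
        using norm_triangle_ineq3[of "of_real \<delta> * T" d] by (simp add: norm_minus_commute)
      then show ?thesis using dT nT dl by (simp add: nd_def norm_mult)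
    qed
    moreover have "M * \<delta> * \<delta> \<le> 1/2 * \<delta>" using Md dl by (intro mult_right_mono) auto
    ultimately have ndl: "\<delta> / 2 \<le> nd" by simp
    have ndu: "nd \<le> \<delta>" using db2[OF dl(1)] by (simp add: nd_def d_def)
    have ndp: "0 < nd" using ndl dl by simp
    define y where "y = nd * nd / (4 * r * r)"
    have y: "0 \<le> y" "y \<le> 1" "y \<le> \<delta> / (4 * r * r)"
    proof -
      show "0 \<le> y" using r_pos by (simp add: y_def)
      have "nd * nd \<le> \<delta> * \<delta>" using ndu ndp by (intro mult_mono) auto
      also have "\<dots> \<le> \<delta>" using dl d1 by (simp add: mult_left_le)
      finally have "nd * nd \<le> \<delta>" .
      then show "y \<le> \<delta> / (4 * r * r)" using r_pos by (simp add: y_def divide_right_mono)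
      have "\<delta> * \<delta> \<le> r * r" using dl d1 by (intro mult_mono) auto
      then have "nd * nd \<le> r * r" using \<open>nd * nd \<le> \<delta> * \<delta>\<close> by linarith
      then have "nd * nd \<le> r * (r * 4)" using mult_pos_pos[OF r_pos r_pos] by linarith
      then show "y \<le> 1" using r_pos by (simp add: y_def field_simps)
    qed
    define sq where "sq = sqrt (1 - y)"
    have sq: "0 \<le> sq" "sq * sq = 1 - y" "1 - sq \<le> y" "sq \<le> 1"
      using y sqrt_bound[of y] by (auto simp: sq_def)
    define u where "u = sgn d"
    have nu: "norm u = 1" using ndp by (simp add: u_def nd_def norm_sgn)
    have du: "d = of_real nd * u" using ndp by (simp add: u_def nd_def sgn_div_norm scaleR_conv_of_real)
    define v1 where "v1 = u * Complex (\<sigma> * sq) (- nd / (2 * r))"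
    define v2 where "v2 = u * Complex (\<sigma> * sq) (nd / (2 * r))"
    have nz: "norm (Complex (\<sigma> * sq) (c * (nd / (2 * r)))) = 1" if "c * c = 1" for c
    proof -
      have "(\<sigma> * sq)\<^sup>2 + (c * (nd / (2 * r)))\<^sup>2 = \<sigma> * \<sigma> * (sq * sq) + c * c * (nd * nd / (4 * r * r))"
        by (simp add: power2_eq_square field_simps)
      also have "\<dots> = 1" using ss sq that by (simp add: y_def)
      finally show ?thesis by (simp add: complex_norm)
    qed
    have nv1: "norm v1 = 1" using nz[of "-1"] nu by (simp add: v1_def norm_mult)
    have nv2: "norm v2 = 1" using nz[of 1] nu by (simp add: v2_def norm_mult)
    have v21: "v2 - v1 = \<i> * d / of_real r"
    proof -
      have "v2 - v1 = u * Complex 0 (nd / r)" by (simp add: v1_def v2_def complex_eq_iff algebra_simps)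
      also have "\<dots> = \<i> * (of_real nd * u) / of_real r" by (simp add: complex_eq_iff)
      finally show ?thesis using du by simp
    qed
    have pt: "\<gamma> t + \<i> * of_real r * v1 = \<gamma> (t + \<delta>) + \<i> * of_real r * v2"
    proof -
      have "\<i> * of_real r * v2 = \<i> * of_real r * v1 + \<i> * of_real r * (\<i> * d / of_real r)"
        using v21 by (simp add: algebra_simps)
      also have "\<i> * of_real r * (\<i> * d / of_real r) = - d" using r_pos by (simp add: field_simps)
      finally show ?thesis by (simp add: d_def)
    qed
    have Geq: "G2 (t, v1) = G2 (t + \<delta>, v2)"
      using B_all[OF nv1, of t] B_all[OF nv2, of "t + \<delta>"] pt by (simp add: G2_eq)
    have uT: "norm (u - T) \<le> 2 * M * \<delta>"
    proof -
      have "sgn (d / of_real \<delta>) = u" using dl by (simp add: u_def sgn_divide sgn_of_real)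
      moreover have "norm (d / of_real \<delta> - T) \<le> M * \<delta>"
      proof -
        have "d / of_real \<delta> - T = (d - of_real \<delta> * T) / of_real \<delta>" using dl by (simp add: field_simps)
        then have "norm (d / of_real \<delta> - T) = norm (d - of_real \<delta> * T) / \<delta>" using dl by (simp add: norm_divide)
        also have "\<dots> \<le> M * \<delta> * \<delta> / \<delta>" using dT dl by (intro divide_right_mono) auto
        finally show ?thesis using dl by simp
      qed
      ultimately show ?thesis using sgn_bound[OF nT, of "d / of_real \<delta>"] by simp
    qed
    have e1: "v1 - of_real \<sigma> * T = of_real \<sigma> * (of_real sq * u - u) + of_real \<sigma> * (u - T) + u * Complex 0 (- nd / (2 * r))"
      by (simp add: v1_def complex_eq_iff algebra_simps)
    have nv1T: "norm (v1 - of_real \<sigma> * T) \<le> (1 / (4 * r * r) + 2 * M + 1 / (2 * r)) * \<delta>"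
    proof -
      have "norm (v1 - of_real \<sigma> * T) \<le> norm (of_real \<sigma> * (of_real sq * u - u)) + norm (of_real \<sigma> * (u - T)) + norm (u * Complex 0 (- nd / (2 * r)))"
        unfolding e1 by (rule order_trans[OF norm_triangle_ineq add_right_mono[OF norm_triangle_ineq]])
      also have "norm (of_real \<sigma> * (of_real sq * u - u)) = 1 - sq"
      proof -
        have "of_real sq * u - u = of_real (sq - 1) * u" by (simp add: algebra_simps)
        then have "norm (of_real \<sigma> * (of_real sq * u - u)) = \<bar>\<sigma>\<bar> * \<bar>sq - 1\<bar> * norm u"
          by (simp only: norm_mult norm_of_real)
        then show ?thesis using ss nu sq by simp
      qed
      also have "norm (of_real \<sigma> * (u - T)) = norm (u - T)" using ss by (simp add: norm_mult)
      also have "norm (u * Complex 0 (- nd / (2 * r))) = nd / (2 * r)" using nu ndp r_pos by (simp add: norm_mult complex_norm)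
      finally have X: "norm (v1 - of_real \<sigma> * T) \<le> 1 - sq + norm (u - T) + nd / (2 * r)" .
      moreover have "nd / (2 * r) \<le> \<delta> / (2 * r)" using ndu r_pos by (intro divide_right_mono) auto
      ultimately have "norm (v1 - of_real \<sigma> * T) \<le> y + 2 * M * \<delta> + \<delta> / (2 * r)"
        using sq(3) uT by linarith
      also have "\<dots> \<le> \<delta> / (4 * r * r) + 2 * M * \<delta> + \<delta> / (2 * r)" using y by simp
      finally show ?thesis by (simp add: algebra_simps)
    qed
    have nv2T: "norm (v2 - of_real \<sigma> * T) \<le> C * \<delta>"
    proof -
      have eq: "v2 - of_real \<sigma> * T = (v1 - of_real \<sigma> * T) + \<i> * d / of_real r" using v21 by (simp add: algebra_simps)
      have nd': "norm (\<i> * d / of_real r) = nd / r" using r_pos by (simp add: norm_mult norm_divide nd_def)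
      have "norm (v2 - of_real \<sigma> * T) \<le> norm (v1 - of_real \<sigma> * T) + norm (\<i> * d / of_real r)"
        unfolding eq by (rule norm_triangle_ineq)
      then have "norm (v2 - of_real \<sigma> * T) \<le> norm (v1 - of_real \<sigma> * T) + nd / r" unfolding nd' .
      also have "\<dots> \<le> (1 / (4 * r * r) + 2 * M + 1 / (2 * r)) * \<delta> + \<delta> / r"
        using nv1T ndu r_pos by (intro add_mono divide_right_mono) auto
      also have "\<dots> \<le> C * \<delta>" using M(1) dl r_pos by (simp add: C_def algebra_simps)
      finally show ?thesis .
    qed
    have nv1T': "norm (v1 - of_real \<sigma> * T) \<le> C * \<delta>"
    proof -
      have "0 \<le> 1 / r + M / r" using M(1) r_pos by simp
      then have "1 / (4 * r * r) + 2 * M + 1 / (2 * r) \<le> C" unfolding C_def by linarith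
      then have "(1 / (4 * r * r) + 2 * M + 1 / (2 * r)) * \<delta> \<le> C * \<delta>" using dl by (intro mult_right_mono) auto
      then show ?thesis using nv1T by linarith
    qed
    have n3: "norm (v2 - v1 - \<i> * of_real \<delta> * T / of_real r) \<le> C * (\<delta> * \<delta>)"
    proof -
      have "v2 - v1 - \<i> * of_real \<delta> * T / of_real r = \<i> * (d - of_real \<delta> * T) / of_real r"
        using v21 by (simp add: algebra_simps diff_divide_distrib)
      then have "norm (v2 - v1 - \<i> * of_real \<delta> * T / of_real r) = norm (d - of_real \<delta> * T) / r"
        using r_pos by (simp add: norm_mult norm_divide)
      also have "\<dots> \<le> M * \<delta> * \<delta> / r" using dT r_pos by (intro divide_right_mono) auto
      also have "\<dots> \<le> C * (\<delta> * \<delta>)"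
      proof -
        have "M / r \<le> C" using M(1) r_pos by (simp add: C_def)
        then have "M / r * (\<delta> * \<delta>) \<le> C * (\<delta> * \<delta>)" by (intro mult_right_mono) auto
        then show ?thesis by (simp add: algebra_simps)
      qed
      finally show ?thesis .
    qed
    show "\<exists>v1 v2. G2 (t, v1) = G2 (t + \<delta>, v2) \<and>
        norm (v1 - of_real \<sigma> * tangent \<gamma> t) \<le> C * \<delta> \<and> norm (v2 - of_real \<sigma> * tangent \<gamma> t) \<le> C * \<delta> \<and>
        norm (v2 - v1 - \<i> * of_real \<delta> * tangent \<gamma> t / of_real r) \<le> C * (\<delta> * \<delta>)"
      using Geq nv1T' nv2T n3 unfolding T_def by blast
  qed
qed


lemma refl_cis:
  assumes sig: "\<sigma> = 1 \<or> \<sigma> = -1"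
  shows "reflect (normal \<gamma> t) (of_real \<sigma> * tangent \<gamma> t * cis \<theta>) = of_real \<sigma> * tangent \<gamma> t * cis (- \<theta>)"
proof -
  define T where "T = tangent \<gamma> t"
  have cT: "cnj T * T = 1" using cnjT by (simp add: T_def)
  have "cnj (normal \<gamma> t) * (of_real \<sigma> * T * cis \<theta>) = - \<i> * of_real \<sigma> * (cnj T * T) * cis \<theta>"
    by (simp add: normal_def T_def ac_simps)
  also have "\<dots> = - \<i> * of_real \<sigma> * cis \<theta>" using cT by simp
  finally have c1: "Re (cnj (normal \<gamma> t) * (of_real \<sigma> * T * cis \<theta>)) = \<sigma> * sin \<theta>" by simp
  have "reflect (normal \<gamma> t) (of_real \<sigma> * T * cis \<theta>) = of_real \<sigma> * T * cis \<theta> - 2 * of_real (\<sigma> * sin \<theta>) * (\<i> * T)"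
    unfolding reflect_def c1 by (simp add: normal_def T_def)
  also have "\<dots> = of_real \<sigma> * T * (cis \<theta> - 2 * \<i> * of_real (sin \<theta>))" by (simp add: algebra_simps)
  also have "cis \<theta> - 2 * \<i> * of_real (sin \<theta>) = cis (- \<theta>)" by (simp add: complex_eq_iff)
  finally show ?thesis by (simp add: T_def)
qed

lemma Dn:
  assumes sig: "\<sigma> = 1 \<or> \<sigma> = -1"
    and hd: "(G2 has_derivative D) (at (t, of_real \<sigma> * tangent \<gamma> t))"
  shows "D (0, \<i> * (of_real \<sigma> * tangent \<gamma> t)) = 0"
proof -
  define w where "w = of_real \<sigma> * tangent \<gamma> t"
  have nw: "norm w = 1" using sig by (auto simp: w_def norm_mult)
  have bl: "bounded_linear D" using hd by (rule has_derivative_bounded_linear)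
  have eq: "G2 (t, w * cis \<theta>) = G2 (t, w * cis (- \<theta>))" for \<theta>
  proof -
    have "norm (w * cis \<theta>) = 1" using nw by (simp add: norm_mult)
    then have "poly_mom a N (\<gamma> t) (w * cis \<theta>) = poly_mom a N (\<gamma> t) (reflect (normal \<gamma> t) (w * cis \<theta>))"
      using integral_parts(3) by blast
    then show ?thesis using refl_cis[OF sig, of t \<theta>] by (simp add: G2_eq w_def)
  qed
  have p1: "((\<lambda>\<theta>. (t, w * cis \<theta>)) has_derivative (\<lambda>h. (0, w * (h *\<^sub>R (\<i> * cis 0))))) (at 0)"
    by (intro has_derivative_Pair has_derivative_const has_derivative_mult_right has_derivative_cis has_derivative_ident)
  have p2: "((\<lambda>\<theta>. (t, w * cis (- \<theta>))) has_derivative (\<lambda>h. (0, w * ((- h) *\<^sub>R (\<i> * cis (- 0)))))) (at 0)"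
    by (intro has_derivative_Pair has_derivative_const has_derivative_mult_right has_derivative_cis has_derivative_minus has_derivative_ident)
  have hd': "(G2 has_derivative D) (at (t, w * cis 0))" "(G2 has_derivative D) (at (t, w * cis (- 0)))"
    using hd by (simp_all add: w_def)
  have d1: "((\<lambda>\<theta>. G2 (t, w * cis \<theta>) - G2 (t, w * cis (- \<theta>))) has_derivative
      (\<lambda>h. D (0, w * (h *\<^sub>R (\<i> * cis 0))) - D (0, w * ((- h) *\<^sub>R (\<i> * cis (- 0)))))) (at 0)"
    by (intro has_derivative_diff has_derivative_compose[OF p1 hd'(1)] has_derivative_compose[OF p2 hd'(2)])
  have d0: "((\<lambda>\<theta>. G2 (t, w * cis \<theta>) - G2 (t, w * cis (- \<theta>))) has_derivative (\<lambda>h. 0)) (at 0)"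
    using eq by simp
  have "(\<lambda>h. D (0, w * (h *\<^sub>R (\<i> * cis 0))) - D (0, w * ((- h) *\<^sub>R (\<i> * cis (- 0))))) = (\<lambda>h. 0)"
    by (rule has_derivative_unique[OF d1 d0])
  from fun_cong[OF this, of 1] have "D (0, w * \<i>) - D (0, - (w * \<i>)) = 0" by simp
  moreover have "D (0, - (w * \<i>)) = - D (0, w * \<i>)"
    using linear_neg[OF bounded_linear.linear[OF bl], of "(0, w * \<i>)"] by simp
  ultimately have "D (0, w * \<i>) = 0" by simp
  then show ?thesis by (simp add: w_def mult.commute)
qed


lemma norm_Pair0: "norm ((0::real), b) = norm b" "norm (x::real, (0::complex)) = \<bar>x\<bar>"
  by (simp_all add: norm_Pair)

lemma Dt:
  assumes sig: "\<sigma> = 1 \<or> \<sigma> = -1"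
    and hd: "(G2 has_derivative D) (at (t, of_real \<sigma> * tangent \<gamma> t))"
  shows "D (1, 0) = 0"
proof -
  define w where "w = of_real \<sigma> * tangent \<gamma> t"
  define P0 where "P0 = (t, w)"
  have bl: "bounded_linear D" using hd by (rule has_derivative_bounded_linear)
  have lin: "linear D" using bl by (rule bounded_linear.linear)
  obtain K where K: "K > 0" "\<And>x. norm (D x) \<le> norm x * K" using bounded_linear.pos_bounded[OF bl] by blast
  have Dw: "D (0, \<i> * w) = 0" using Dn[OF sig hd] by (simp add: w_def)
  have DT: "D (0, \<i> * tangent \<gamma> t) = 0"
  proof -
    have "(0::real, \<i> * tangent \<gamma> t) = \<sigma> *\<^sub>R (0, \<i> * w)" using sig by (auto simp: w_def)
    then show ?thesis using linear_scale[OF lin, of \<sigma> "(0, \<i> * w)"] Dw by simp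
  qed
  obtain C \<delta>0 where C: "0 < \<delta>0" "0 \<le> C"
    "\<And>\<delta>. 0 < \<delta> \<Longrightarrow> \<delta> \<le> \<delta>0 \<Longrightarrow> \<exists>v1 v2. G2 (t, v1) = G2 (t + \<delta>, v2) \<and>
        norm (v1 - w) \<le> C * \<delta> \<and> norm (v2 - w) \<le> C * \<delta> \<and>
        norm (v2 - v1 - \<i> * of_real \<delta> * tangent \<gamma> t / of_real r) \<le> C * (\<delta> * \<delta>)"
    using circ[OF sig, of t] unfolding w_def by blast
  have fr: "\<forall>e>0. \<exists>d>0. \<forall>y. norm (y - P0) < d \<longrightarrow> norm (G2 y - G2 P0 - D (y - P0)) \<le> e * norm (y - P0)"
    using hd unfolding has_derivative_at_alt P0_def w_def by blast
  have small: "\<bar>D (1, 0)\<bar> \<le> \<epsilon>" if \<epsilon>: "\<epsilon> > 0" for \<epsilon>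
  proof -
    define e where "e = \<epsilon> / (2 * (2 * C + 1))"
    have e: "e > 0" using \<epsilon> C by (simp add: e_def)
    obtain dd where dd: "dd > 0" "\<And>y. norm (y - P0) < dd \<Longrightarrow> norm (G2 y - G2 P0 - D (y - P0)) \<le> e * norm (y - P0)"
      using fr e by blast
    define \<delta> where "\<delta> = min \<delta>0 (min (dd / (C + 2)) (\<epsilon> / (2 * K * C + 1))) / 2"
    have "0 \<le> K * C" using K(1) C(2) by simp
    then have kc: "0 < 2 * K * C + 1" by linarith
    have \<delta>: "0 < \<delta>" "\<delta> \<le> \<delta>0" "(C + 1) * \<delta> < dd" "K * C * \<delta> \<le> \<epsilon> / 2"
    proof -
      show "0 < \<delta>" using C dd \<epsilon> K kc by (simp add: \<delta>_def)
      show "\<delta> \<le> \<delta>0" using C dd \<epsilon> K by (simp add: \<delta>_def)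
      have m1: "min \<delta>0 (min (dd / (C + 2)) (\<epsilon> / (2 * K * C + 1))) \<le> dd / (C + 2)" by simp
      have "0 < dd / (C + 2)" using dd C by simp
      have aux: "\<And>m x::real. m \<le> x \<Longrightarrow> 0 < x \<Longrightarrow> m / 2 < x" by linarith
      have "\<delta> < dd / (C + 2)" unfolding \<delta>_def by (rule aux[OF m1]) fact
      then have "(C + 2) * \<delta> < dd" using C by (simp add: field_simps)
      then show "(C + 1) * \<delta> < dd" using \<open>0 < \<delta>\<close> by (simp add: algebra_simps)
      have m2: "min \<delta>0 (min (dd / (C + 2)) (\<epsilon> / (2 * K * C + 1))) \<le> \<epsilon> / (2 * K * C + 1)" by simp
      have "0 < \<epsilon> / (2 * K * C + 1)" using \<epsilon> kc by simp
      have aux2: "\<And>m x::real. m \<le> x \<Longrightarrow> 0 < x \<Longrightarrow> m / 2 \<le> x" by linarith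
      have "\<delta> \<le> \<epsilon> / (2 * K * C + 1)" unfolding \<delta>_def by (rule aux2[OF m2]) fact
      then have "\<delta> * (2 * K * C + 1) \<le> \<epsilon> / (2 * K * C + 1) * (2 * K * C + 1)"
        using kc by (intro mult_right_mono) auto
      then have "(2 * K * C + 1) * \<delta> \<le> \<epsilon>" using kc by (simp add: mult.commute)
      then show "K * C * \<delta> \<le> \<epsilon> / 2" using \<open>0 < \<delta>\<close> by (simp add: algebra_simps)
    qed
    obtain v1 v2 where v: "G2 (t, v1) = G2 (t + \<delta>, v2)" "norm (v1 - w) \<le> C * \<delta>" "norm (v2 - w) \<le> C * \<delta>"
      "norm (v2 - v1 - \<i> * of_real \<delta> * tangent \<gamma> t / of_real r) \<le> C * (\<delta> * \<delta>)"
      using C(3)[OF \<delta>(1,2)] by blast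
    define P1 where "P1 = (t, v1)"
    define P2 where "P2 = (t + \<delta>, v2)"
    have n1: "norm (P1 - P0) \<le> C * \<delta>" using v(2) by (simp add: P1_def P0_def norm_Pair0)
    have n2: "norm (P2 - P0) \<le> (C + 1) * \<delta>"
    proof -
      have "P2 - P0 = (\<delta>, v2 - w)" by (simp add: P2_def P0_def)
      then have "norm (P2 - P0) \<le> norm \<delta> + norm (v2 - w)" using norm_Pair_le[of \<delta> "v2 - w"] by simp
      then show ?thesis using v(3) \<delta>(1) by (simp add: algebra_simps)
    qed
    have "C * \<delta> \<le> (C + 1) * \<delta>" using \<delta>(1) by (simp add: algebra_simps)
    then have "norm (P1 - P0) < dd" using n1 \<delta>(3) by linarith
    then have "norm (G2 P1 - G2 P0 - D (P1 - P0)) \<le> e * norm (P1 - P0)" by (rule dd(2))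
    also have "\<dots> \<le> e * (C * \<delta>)" using n1 e by (intro mult_left_mono) auto
    finally have r1: "\<bar>G2 P1 - G2 P0 - D (P1 - P0)\<bar> \<le> e * (C * \<delta>)" by simp
    have "norm (P2 - P0) < dd" using n2 \<delta>(3) by linarith
    then have "norm (G2 P2 - G2 P0 - D (P2 - P0)) \<le> e * norm (P2 - P0)" by (rule dd(2))
    also have "\<dots> \<le> e * ((C + 1) * \<delta>)" using n2 e by (intro mult_left_mono) auto
    finally have r2: "\<bar>G2 P2 - G2 P0 - D (P2 - P0)\<bar> \<le> e * ((C + 1) * \<delta>)" by simp
    define q where "q = v2 - v1 - \<i> * of_real \<delta> * tangent \<gamma> t / of_real r"
    have cq: "(\<delta> / r) *\<^sub>R (\<i> * tangent \<gamma> t) = \<i> * of_real \<delta> * tangent \<gamma> t / of_real r"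
      by (simp add: scaleR_conv_of_real of_real_divide)
    have eq: "P2 - P0 - (P1 - P0) = \<delta> *\<^sub>R (1, 0) + ((0, q) + (\<delta> / r) *\<^sub>R (0, \<i> * tangent \<gamma> t))"
      unfolding P1_def P2_def P0_def q_def by (simp add: cq)
    have "D (P2 - P0) - D (P1 - P0) = D (P2 - P0 - (P1 - P0))" by (rule linear_diff[OF lin, symmetric])
    also have "\<dots> = D (\<delta> *\<^sub>R (1, 0)) + (D (0, q) + D ((\<delta> / r) *\<^sub>R (0, \<i> * tangent \<gamma> t)))"
      unfolding eq linear_add[OF lin] ..
    also have "\<dots> = \<delta> * D (1, 0) + D (0, q)" by (simp only: linear_scale[OF lin] DT) simp
    finally have "D (P2 - P0) - D (P1 - P0) = \<delta> * D (1, 0) + D (0, q)" .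
    moreover have "G2 P2 = G2 P1" using v(1) by (simp add: P1_def P2_def)
    ultimately have eqd: "\<delta> * D (1, 0) = - D (0, q) + (G2 P1 - G2 P0 - D (P1 - P0)) - (G2 P2 - G2 P0 - D (P2 - P0))"
      by linarith
    have tri: "\<And>a b c :: real. \<bar>- a + b - c\<bar> \<le> \<bar>a\<bar> + \<bar>b\<bar> + \<bar>c\<bar>" by arith
    have "\<bar>\<delta> * D (1, 0)\<bar> \<le> \<bar>D (0, q)\<bar> + \<bar>G2 P1 - G2 P0 - D (P1 - P0)\<bar> + \<bar>G2 P2 - G2 P0 - D (P2 - P0)\<bar>"
      unfolding eqd by (rule tri)
    then have "\<bar>\<delta> * D (1, 0)\<bar> \<le> norm (D (0, q)) + e * ((C + 1) * \<delta>) + e * (C * \<delta>)"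
      using r1 r2 by simp
    moreover have "norm (D (0, q)) \<le> K * C * \<delta> * \<delta>"
    proof -
      have "norm (D (0, q)) \<le> norm q * K" using K(2)[of "(0, q)"] by (simp add: norm_Pair0)
      also have "\<dots> \<le> C * (\<delta> * \<delta>) * K" using v(4) K by (simp add: q_def mult_right_mono)
      finally show ?thesis by (simp add: algebra_simps)
    qed
    ultimately have "\<delta> * \<bar>D (1, 0)\<bar> \<le> \<delta> * (K * C * \<delta> + e * (2 * C + 1))"
      using \<delta>(1) by (simp add: abs_mult algebra_simps)
    then have "\<bar>D (1, 0)\<bar> \<le> K * C * \<delta> + e * (2 * C + 1)" using \<delta>(1) by simp
    also have "e * (2 * C + 1) = \<epsilon> / 2" using C by (simp add: e_def field_simps)
    finally show ?thesis using \<delta>(4) by simp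
  qed
  show ?thesis
  proof (rule ccontr)
    assume "D (1, 0) \<noteq> 0"
    then have "\<bar>D (1, 0)\<bar> > 0" by simp
    from small[OF half_gt_zero[OF this]] show False using \<open>\<bar>D (1, 0)\<bar> > 0\<close> by linarith
  qed
qed


lemma const_side:
  assumes sig: "\<sigma> = 1 \<or> \<sigma> = -1"
  shows "\<exists>C. \<forall>s. F (\<gamma> s + \<i> * of_real r * (of_real \<sigma> * tangent \<gamma> s)) = C"
proof -
  define f where "f = (\<lambda>s. G2 (s, of_real \<sigma> * tangent \<gamma> s))"
  have der: "(f has_real_derivative 0) (at t)" for t
  proof -
    define D where "D = frechet_derivative G2 (at (t, of_real \<sigma> * tangent \<gamma> t))"
    have hd: "(G2 has_derivative D) (at (t, of_real \<sigma> * tangent \<gamma> t))"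
      unfolding D_def using G2_diff frechet_derivative_works by blast
    have lin: "linear D" using has_derivative_bounded_linear[OF hd] by (rule bounded_linear.linear)
    have D1: "D (1, 0) = 0" by (rule Dt[OF sig hd])
    have Dw: "D (0, \<i> * (of_real \<sigma> * tangent \<gamma> t)) = 0" by (rule Dn[OF sig hd])
    have DT: "D (0, \<i> * tangent \<gamma> t) = 0"
    proof -
      have "(0::real, \<i> * tangent \<gamma> t) = \<sigma> *\<^sub>R (0, \<i> * (of_real \<sigma> * tangent \<gamma> t))" using sig by auto
      then show ?thesis using linear_scale[OF lin, of \<sigma> "(0, \<i> * (of_real \<sigma> * tangent \<gamma> t))"] Dw by simp
    qed
    define \<mu> where "\<mu> = Im (cnj (tangent \<gamma> t) * T2 t)"
    have "T2 t = of_real 0 * tangent \<gamma> t + of_real \<mu> * (\<i> * tangent \<gamma> t)"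
      using decomp[OF cnjT, of "T2 t" t] unfolding T2_perp[of t] \<mu>_def[symmetric] .
    then have T2d: "T2 t = of_real \<mu> * (\<i> * tangent \<gamma> t)" by (simp only: of_real_0 mult_zero_left add_0)
    have cd: "((\<lambda>s. (s, of_real \<sigma> * tangent \<gamma> s)) has_derivative (\<lambda>h. (h, of_real \<sigma> * (h *\<^sub>R T2 t)))) (at t)"
      using td[of t] unfolding has_vector_derivative_def
      by (intro has_derivative_Pair has_derivative_ident has_derivative_mult_right)
    have fd: "(f has_derivative (\<lambda>h. D (h, of_real \<sigma> * (h *\<^sub>R T2 t)))) (at t)"
      unfolding f_def by (rule has_derivative_compose[OF cd hd])
    have "(h, of_real \<sigma> * (h *\<^sub>R T2 t)) = h *\<^sub>R (1, 0) + (h * \<sigma> * \<mu>) *\<^sub>R (0, \<i> * tangent \<gamma> t)" for h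
      by (simp add: T2d scaleR_conv_of_real algebra_simps)
    then have "(\<lambda>h. D (h, of_real \<sigma> * (h *\<^sub>R T2 t))) = (\<lambda>h. 0)"
      by (simp only: linear_add[OF lin] linear_scale[OF lin] D1 DT) simp
    moreover have "(*) (0::real) = (\<lambda>h. 0)" by auto
    ultimately show ?thesis using fd by (simp add: has_field_derivative_def)
  qed
  have "f s = f 0" for s by (rule DERIV_isconst_all) (use der in blast)
  moreover have "F (\<gamma> s + \<i> * of_real r * (of_real \<sigma> * tangent \<gamma> s)) = f s" for s
  proof -
    have "norm (of_real \<sigma> * tangent \<gamma> s) = 1" using sig by (auto simp: norm_mult)
    then show ?thesis using B_all by (simp add: f_def G2_eq)
  qed
  ultimately show ?thesis by metis
qed

end


theorem proposition2p5:
  fixes \<gamma> :: "real \<Rightarrow> complex" and L r :: real and \<Omega> :: "complex set"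
    and a :: "nat \<Rightarrow> nat \<Rightarrow> complex \<Rightarrow> real" and N :: nat and F :: "complex \<Rightarrow> real"
  assumes L_pos: "0 < L"
    and smooth: "smooth_curve \<gamma>"
    and periodic: "\<forall>t. \<gamma> (t + L) = \<gamma> t"
    and simple: "inj_on \<gamma> {0..<L}"
    and arclength: "\<forall>t. norm (tangent \<gamma> t) = 1"
    and domain: "open \<Omega>" "connected \<Omega>" "bounded \<Omega>"
    and boundary: "frontier \<Omega> = \<gamma> ` {0..L}"
    and ccw: "\<forall>z\<in>\<Omega>. winding_number (\<lambda>u. \<gamma> (L * u)) z = 1"
    and r_pos: "0 < r"
    and curv: "r < tubular_radius \<gamma> L / 2"
    and integral: "poly_integral \<gamma> \<Omega> r a N"
    and F_cont: "continuous_on (Omega_r_closed \<gamma> r) F"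
    and F_def: "\<forall>x v. x \<in> \<Omega> \<and> norm v = 1 \<and> \<not> sphere (x + \<i> * of_real r * v) r \<subseteq> \<Omega> \<longrightarrow>
                  F (x + \<i> * of_real r * v) = poly_mom a N x v"
  shows "(\<exists>C. \<forall>t. F (offset \<gamma> r t) = C) \<and> (\<exists>C. \<forall>t. F (offset \<gamma> (-r) t) = C)"
proof -
  interpret main \<gamma> L \<Omega> r a N F
    by unfold_locales (use L_pos smooth periodic simple arclength domain boundary ccw r_pos integral F_cont F_def in auto)
  obtain gf D1 D2 where g: "\<And>k l z. (k, l) \<in> Iset \<Longrightarrow> z \<in> Omega_plus \<gamma> r \<Longrightarrow> gf k l z = a k l z"
    "\<And>k l z. (k, l) \<in> Iset \<Longrightarrow> z \<in> Omega_plus \<gamma> r \<Longrightarrow>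
        (gf k l has_derivative (\<lambda>h. Re h * D1 k l z + Im h * D2 k l z)) (at z)"
    by (rule gchoice) blast+
  interpret main2 \<gamma> L \<Omega> r a N F gf D1 D2
    by unfold_locales (use g in auto)
  obtain C1 where C1: "\<forall>s. F (\<gamma> s + \<i> * of_real r * (of_real 1 * tangent \<gamma> s)) = C1"
    using const_side[of 1] by auto
  obtain C2 where C2: "\<forall>s. F (\<gamma> s + \<i> * of_real r * (of_real (-1) * tangent \<gamma> s)) = C2"
    using const_side[of "-1"] by auto
  have "F (offset \<gamma> r t) = C1" for t
    using C1[rule_format, of t] by (simp add: offset_def normal_def algebra_simps)
  moreover have "F (offset \<gamma> (-r) t) = C2" for t
    using C2[rule_format, of t] by (simp add: offset_def normal_def algebra_simps)
  ultimately show ?thesis by blast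
qed

end
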